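(* For any two graphs $G_1$ and $G_2$, $st(G_1\times G_2)\le st(G_1)\,st(G_2)+st(G_1)+st(G_2)$.
   Context: $G_1\times G_2$ is the Cartesian product: vertex set $V_1\times V_2$, with $(u_1,u_2)$ adjacent to $(v_1,v_2)$ iff either $u_1=v_1$ and $u_2v_2$ is an edge of $G_2$, or $u_2=v_2$ and $u_1v_1$ is an edge of $G_1$. A sorted ordering of a graph on $n$ vertices is a bijection $\pi$ from its vertices to $\{1,\dots,n\}$. A directed matching is a matching some of whose edges are oriented. A sorting network on $G$ is a triple $\mathcal{S}(H,M,\pi)$ where $H$ is a connected spanning subgraph of $G$, $\pi$ a sorted ordering, and $M=(m_1,\dots,m_{|M|})$ a sequence of directed matchings of $H$ covering every edge of $H$ at least once; each vertex holds a pebble with a value, and at stage $i$ each directed edge $u\to v$ of $m_i$ puts the smaller of its two pebbles on $u$ and the larger on $v$, while each undirected edge of $m_i$ swaps its pebbles; after all stages, for every initial arrangement of $n$ distinct values, vertex $i$ must hold the pebble of rank $\pi(i)$. The depth is $|M|$. The sorting number $st(G)$ is the minimum depth of any sorting network on $G$ (over all spanning subgraphs and sorted orderings); $st(G)=\infty$ if none exists. *)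

theory Defs
  imports Main "HOL-Library.Extended_Nat"
begin

definition graph :: "'a set \<Rightarrow> 'a set set \<Rightarrow> bool" where
  "graph V E \<longleftrightarrow> finite V \<and> (\<forall>e\<in>E. \<exists>u v. e = {u, v} \<and> u \<noteq> v \<and> u \<in> V \<and> v \<in> V)"

definition cart_edges :: "'a set \<Rightarrow> 'a set set \<Rightarrow> 'b set \<Rightarrow> 'b set set \<Rightarrow> ('a \<times> 'b) set set" where
  "cart_edges V1 E1 V2 E2 =
     {{(u1, u2), (v1, v2)} | u1 u2 v1 v2.
        (u1 = v1 \<and> u1 \<in> V1 \<and> {u2, v2} \<in> E2) \<or> (u2 = v2 \<and> u2 \<in> V2 \<and> {u1, v1} \<in> E1)}"

definition connected_graph :: "'a set \<Rightarrow> 'a set set \<Rightarrow> bool" where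
  "connected_graph V E \<longleftrightarrow> (\<forall>u\<in>V. \<forall>v\<in>V. (u, v) \<in> {(x, y). {x, y} \<in> E}\<^sup>*)"

(* A directed matching: a set of edges (u,v,b); b = True means oriented u \<rightarrow> v
   (smaller pebble to u), b = False means an undirected edge {u,v} (swap). *)
type_synonym 'a dmatching = "('a \<times> 'a \<times> bool) set"

fun ends :: "'a \<times> 'a \<times> bool \<Rightarrow> 'a set" where
  "ends (u, v, b) = {u, v}"

definition dir_matching :: "'a set set \<Rightarrow> 'a dmatching \<Rightarrow> bool" where
  "dir_matching EH m \<longleftrightarrow> (\<forall>p\<in>m. ends p \<in> EH) \<and>
     (\<forall>p\<in>m. \<forall>q\<in>m. p \<noteq> q \<longrightarrow> ends p \<inter> ends q = {})"

definition step :: "'a dmatching \<Rightarrow> ('a \<Rightarrow> nat) \<Rightarrow> ('a \<Rightarrow> nat)" where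
  "step m f x =
     (if \<exists>y. (x, y, True) \<in> m then min (f x) (f (SOME y. (x, y, True) \<in> m))
      else if \<exists>y. (y, x, True) \<in> m then max (f x) (f (SOME y. (y, x, True) \<in> m))
      else if \<exists>y. (x, y, False) \<in> m \<or> (y, x, False) \<in> m
        then f (SOME y. (x, y, False) \<in> m \<or> (y, x, False) \<in> m)
      else f x)"

definition run :: "'a dmatching list \<Rightarrow> ('a \<Rightarrow> nat) \<Rightarrow> ('a \<Rightarrow> nat)" where
  "run M f = foldl (\<lambda>g m. step m g) f M"

(* S(H,M,\<pi>) is a sorting network on G = (V,E); H = (V,EH).
   Initial arrangements of n distinct values are represented by their ranks,
   i.e. bijections V \<rightarrow> {1..n}. *)
definition sorting_network ::
  "'a set \<Rightarrow> 'a set set \<Rightarrow> 'a set set \<Rightarrow> 'a dmatching list \<Rightarrow> ('a \<Rightarrow> nat) \<Rightarrow> bool" where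
  "sorting_network V E EH M \<pi> \<longleftrightarrow>
     EH \<subseteq> E \<and> connected_graph V EH \<and>
     bij_betw \<pi> V {1..card V} \<and>
     (\<forall>m\<in>set M. dir_matching EH m) \<and>
     (\<forall>e\<in>EH. \<exists>m\<in>set M. \<exists>p\<in>m. e = ends p) \<and>
     (\<forall>f. bij_betw f V {1..card V} \<longrightarrow> (\<forall>x\<in>V. run M f x = \<pi> x))"

definition sorting_number :: "'a set \<Rightarrow> 'a set set \<Rightarrow> enat" where
  "sorting_number V E =
     (if \<exists>EH M \<pi>. sorting_network V E EH M \<pi>
      then enat (LEAST d. \<exists>EH M \<pi>. sorting_network V E EH M \<pi> \<and> length M = d)
      else \<infinity>)"

end

theory Submission imports Defs begin

definition gstep :: "('b\<Rightarrow>'b\<Rightarrow>'b) \<Rightarrow> ('b\<Rightarrow>'b\<Rightarrow>'b) \<Rightarrow> 'a dmatching \<Rightarrow> ('a\<Rightarrow>'b) \<Rightarrow> ('a\<Rightarrow>'b)" where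
"gstep lo hi m f x =
     (if \<exists>y. (x, y, True) \<in> m then lo (f x) (f (SOME y. (x, y, True) \<in> m))
      else if \<exists>y. (y, x, True) \<in> m then hi (f x) (f (SOME y. (y, x, True) \<in> m))
      else if \<exists>y. (x, y, False) \<in> m \<or> (y, x, False) \<in> m
        then f (SOME y. (x, y, False) \<in> m \<or> (y, x, False) \<in> m)
      else f x)"

lemma step_gstep: "step m = gstep min max m"
  by (intro ext) (simp add: step_def gstep_def)

definition wfm :: "'a dmatching \<Rightarrow> bool" where
"wfm m \<longleftrightarrow> (\<forall>u v b. (u,v,b)\<in>m \<longrightarrow> u \<noteq> v) \<and> (\<forall>p\<in>m. \<forall>q\<in>m. p \<noteq> q \<longrightarrow> ends p \<inter> ends q = {})"

lemma wfm_neq: "wfm m \<Longrightarrow> (u,v,b)\<in>m \<Longrightarrow> u \<noteq> v"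
  by (auto simp: wfm_def)

lemma wfm_uniq: "wfm m \<Longrightarrow> p\<in>m \<Longrightarrow> q\<in>m \<Longrightarrow> x \<in> ends p \<Longrightarrow> x \<in> ends q \<Longrightarrow> p = q"
  unfolding wfm_def by blast

lemma wfm_uniq': "wfm m \<Longrightarrow> (a,b,c)\<in>m \<Longrightarrow> (a',b',c')\<in>m \<Longrightarrow> x \<in> {a,b} \<Longrightarrow> x \<in> {a',b'} \<Longrightarrow> a=a' \<and> b=b' \<and> c=c'"
  using wfm_uniq[of m "(a,b,c)" "(a',b',c')" x] by auto

lemma gs_lo: assumes "wfm m" "(x,y,True)\<in>m" shows "gstep lo hi m f x = lo (f x) (f y)"
proof -
  have u: "z = y" if "(x,z,True)\<in>m" for z using wfm_uniq'[OF assms(1) that assms(2), of x] by simp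
  have "(SOME y. (x, y, True) \<in> m) = y"
    using assms(2) u by (rule some_equality)
  thus ?thesis using assms(2) by (simp add: gstep_def, blast)
qed

lemma gs_hi: assumes "wfm m" "(y,x,True)\<in>m" shows "gstep lo hi m f x = hi (f x) (f y)"
proof -
  have n: "\<not>(\<exists>z. (x,z,True)\<in>m)"
  proof
    assume "\<exists>z. (x,z,True)\<in>m" then obtain z where z: "(x,z,True)\<in>m" by blast
    show False using wfm_uniq'[OF assms(1) z assms(2), of x] wfm_neq[OF assms(1) assms(2)] by simp
  qed
  have u: "z = y" if "(z,x,True)\<in>m" for z using wfm_uniq'[OF assms(1) that assms(2), of x] by simp
  have "(SOME z. (z, x, True) \<in> m) = y"
    using assms(2) u by (rule some_equality)
  thus ?thesis using assms(2) n by (simp add: gstep_def, blast)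
qed

lemma gs_sw: assumes "wfm m" "(x,y,False)\<in>m \<or> (y,x,False)\<in>m" shows "gstep lo hi m f x = f y"
proof -
  have n1: "\<not>(\<exists>z. (x,z,True)\<in>m)"
  proof
    assume "\<exists>z. (x,z,True)\<in>m" then obtain z where z: "(x,z,True)\<in>m" by blast
    show False using assms(2)
    proof
      assume h: "(x,y,False)\<in>m" show False using wfm_uniq'[OF assms(1) z h, of x] by simp
    next
      assume h: "(y,x,False)\<in>m" show False using wfm_uniq'[OF assms(1) z h, of x] by simp
    qed
  qed
  have n2: "\<not>(\<exists>z. (z,x,True)\<in>m)"
  proof
    assume "\<exists>z. (z,x,True)\<in>m" then obtain z where z: "(z,x,True)\<in>m" by blast
    show False using assms(2)
    proof
      assume h: "(x,y,False)\<in>m" show False using wfm_uniq'[OF assms(1) z h, of x] by simp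
    next
      assume h: "(y,x,False)\<in>m" show False using wfm_uniq'[OF assms(1) z h, of x] by simp
    qed
  qed
  have u: "z = y" if h: "(x,z,False)\<in>m \<or> (z,x,False)\<in>m" for z
  proof (rule disjE[OF h]; rule disjE[OF assms(2)])
    assume a: "(x,z,False)\<in>m" "(x,y,False)\<in>m" thus ?thesis using wfm_uniq'[OF assms(1) a, of x] by simp
  next
    assume a: "(x,z,False)\<in>m" "(y,x,False)\<in>m" thus ?thesis using wfm_uniq'[OF assms(1) a, of x] wfm_neq[OF assms(1) a(1)] by simp
  next
    assume a: "(z,x,False)\<in>m" "(x,y,False)\<in>m" thus ?thesis using wfm_uniq'[OF assms(1) a, of x] wfm_neq[OF assms(1) a(1)] by simp
  next
    assume a: "(z,x,False)\<in>m" "(y,x,False)\<in>m" thus ?thesis using wfm_uniq'[OF assms(1) a, of x] by simp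
  qed
  have sm: "(SOME z. (x,z,False)\<in>m \<or> (z,x,False)\<in>m) = y"
    using assms(2) u by (rule some_equality)
  have ex: "\<exists>z. (x,z,False)\<in>m \<or> (z,x,False)\<in>m" using assms(2) by blast
  show ?thesis unfolding gstep_def
    by (subst if_not_P[OF n1], subst if_not_P[OF n2], subst if_P[OF ex]) (simp only: sm)
qed

lemma gs_none: assumes "\<And>y b. (x,y,b)\<notin>m \<and> (y,x,b)\<notin>m" shows "gstep lo hi m f x = f x"
proof -
  have n1: "\<not>(\<exists>z. (x,z,True)\<in>m)" and n2: "\<not>(\<exists>z. (z,x,True)\<in>m)"
   and n3: "\<not>(\<exists>z. (x,z,False)\<in>m \<or> (z,x,False)\<in>m)" using assms by blast+
  show ?thesis unfolding gstep_def
    by (subst if_not_P[OF n1], subst if_not_P[OF n2], subst if_not_P[OF n3]) (rule refl)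
qed

lemma run_Nil[simp]: "run [] f = f" by (simp add: run_def)
lemma run_Cons[simp]: "run (m#M) f = run M (step m f)" by (simp add: run_def)
lemma run_append: "run (M@M') f = run M' (run M f)" by (simp add: run_def)
lemma run_snoc: "run (M@[m]) f = step m (run M f)" by (simp add: run_def)

lemma step_mono_comm: "mono g \<Longrightarrow> step m (\<lambda>x. g (f x)) x = g (step m f x)"
  by (simp add: step_def min_of_mono max_of_mono)

lemma run_mono_comm: "mono g \<Longrightarrow> run M (\<lambda>x. g (f x)) = (\<lambda>x. g (run M f x))"
proof (induction M arbitrary: f)
  case Nil thus ?case by simp
next
  case (Cons m M)
  have "step m (\<lambda>x. g (f x)) = (\<lambda>x. g (step m f x))" using Cons.prems by (intro ext step_mono_comm)
  thus ?case using Cons by simp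
qed


lemma bij_shift: "bij_betw a A {0..<n} \<Longrightarrow> bij_betw (\<lambda>z. a z + (c::nat)) A {c..<c+n}"
proof -
  assume b: "bij_betw a A {0..<n}"
  have "bij_betw (\<lambda>k. k + c) {0..<n} {c..<c+n}"
    unfolding bij_betw_def
  proof
    show "inj_on (\<lambda>k. k + c) {0..<n}" by (simp add: inj_on_def)
    show "(\<lambda>k. k + c) ` {0..<n} = {c..<c+n}"
    proof
      show "(\<lambda>k. k + c) ` {0..<n} \<subseteq> {c..<c+n}" by auto
      show "{c..<c+n} \<subseteq> (\<lambda>k. k + c) ` {0..<n}"
      proof
        fix x assume "x \<in> {c..<c+n}"
        hence "x - c \<in> {0..<n}" "x = (x - c) + c" by auto
        thus "x \<in> (\<lambda>k. k + c) ` {0..<n}" by blast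
      qed
    qed
  qed
  from bij_betw_trans[OF b this] show ?thesis by (simp add: comp_def)
qed

lemma sort01:
  assumes fin: "finite V" and srt: "\<forall>f. bij_betw f V {1..card V} \<longrightarrow> (\<forall>x\<in>V. run M f x = \<pi> x)"
    and zo: "\<forall>z. h z \<le> (1::nat)"
  shows "\<forall>x\<in>V. run M h x = (if card V - card {z\<in>V. h z = 1} < \<pi> x then 1 else 0)"
proof -
  define Z where "Z = {z\<in>V. h z = 0}"
  define On where "On = {z\<in>V. h z = 1}"
  define z0 where "z0 = card Z"
  have fZ: "finite Z" "finite On" using fin by (auto simp: Z_def On_def)
  have VZO: "V = Z \<union> On" using zo by (auto simp: Z_def On_def le_Suc_eq)
  have dis: "Z \<inter> On = {}" by (auto simp: Z_def On_def)
  have cV: "card V = z0 + card On" unfolding z0_def VZO using card_Un_disjoint[OF fZ dis] .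
  obtain a where a: "bij_betw a Z {0..<z0}" using ex_bij_betw_finite_nat[OF fZ(1)] z0_def by blast
  obtain b where b: "bij_betw b On {0..<card On}" using ex_bij_betw_finite_nat[OF fZ(2)] by blast
  define f where "f z = (if z \<in> Z then a z + 1 else if z \<in> On then b z + (z0 + 1) else if h z = 1 then card V + 1 else 0)" for z
  have bZ: "bij_betw f Z {1..<1+z0}"
    using bij_shift[OF a, of 1] by (rule bij_betw_cong[THEN iffD1, rotated]) (simp add: f_def)
  have bO: "bij_betw f On {z0+1..<(z0+1)+card On}"
    using bij_shift[OF b, of "z0+1"] by (rule bij_betw_cong[THEN iffD1, rotated]) (use dis in \<open>auto simp: f_def\<close>)
  have bf: "bij_betw f V {1..card V}"
  proof -
    have "bij_betw f (Z \<union> On) ({1..<1+z0} \<union> {z0+1..<(z0+1)+card On})"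
      by (rule bij_betw_combine[OF bZ bO]) auto
    moreover have "{1..<1+z0} \<union> {z0+1..<(z0+1)+card On} = {1..card V}" unfolding cV by auto
    ultimately show ?thesis using VZO by simp
  qed
  define g where "g k = (if z0 < k then 1 else (0::nat))" for k
  have mg: "mono g" by (auto simp: mono_def g_def)
  have hg: "h = (\<lambda>z. g (f z))"
  proof
    fix z show "h z = g (f z)"
    proof (cases "z \<in> Z")
      case True
      have "a z \<in> {0..<z0}" using bij_betwE[OF a] True by blast
      thus ?thesis using True unfolding f_def g_def by (auto simp: Z_def)
    next
      case nz: False
      show ?thesis
      proof (cases "z \<in> On")
        case True thus ?thesis using nz unfolding f_def g_def by (auto simp: On_def)
      next
        case False
        hence "z \<notin> V" using nz VZO by blast
        thus ?thesis using nz False zo[rule_format, of z] unfolding f_def g_def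
          by (auto simp: cV le_Suc_eq)
      qed
    qed
  qed
  show ?thesis
  proof
    fix x assume x: "x \<in> V"
    have "run M h x = g (run M f x)" unfolding hg using run_mono_comm[OF mg] by metis
    also have "\<dots> = g (\<pi> x)" using srt bf x by auto
    finally show "run M h x = (if card V - card {z\<in>V. h z = 1} < \<pi> x then 1 else 0)"
      using On_def cV by (simp add: g_def)
  qed
qed


lemma step_range: "step m g x \<in> range g"
  unfolding step_def by (auto simp: min_def max_def)

lemma step_le: "\<forall>y. g y \<le> K \<Longrightarrow> step m g x \<le> K"
  using step_range[of m g x] by auto

lemma run_le: "\<forall>y. g y \<le> K \<Longrightarrow> \<forall>y. run M g y \<le> K"
proof (induction M arbitrary: g)
  case Nil thus ?case by simp
next
  case (Cons m M) thus ?case using step_le[of g K m] by simp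
qed

fun fl :: "'a \<times> 'a \<times> bool \<Rightarrow> 'a \<times> 'a \<times> bool" where
  "fl (u,v,b) = (if b then (v,u,b) else (u,v,b))"

definition flip :: "'a dmatching \<Rightarrow> 'a dmatching" where
  "flip m = fl ` m"

lemma fl_fl[simp]: "fl (fl p) = p" by (cases p) auto
lemma ends_fl[simp]: "ends (fl p) = ends p" by (cases p) auto

lemma flip_T: "(a,b,True) \<in> flip m \<longleftrightarrow> (b,a,True) \<in> m"
proof
  assume "(a,b,True) \<in> flip m" then obtain p where "p\<in>m" "(a,b,True) = fl p" by (auto simp: flip_def)
  then show "(b,a,True) \<in> m" by (cases p) (auto split: if_splits)
next
  assume "(b,a,True) \<in> m" thus "(a,b,True) \<in> flip m" unfolding flip_def by (rule rev_image_eqI) simp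
qed

lemma flip_F: "(a,b,False) \<in> flip m \<longleftrightarrow> (a,b,False) \<in> m"
proof
  assume "(a,b,False) \<in> flip m" then obtain p where "p\<in>m" "(a,b,False) = fl p" by (auto simp: flip_def)
  then show "(a,b,False) \<in> m" by (cases p) (auto split: if_splits)
next
  assume "(a,b,False) \<in> m" thus "(a,b,False) \<in> flip m" unfolding flip_def by (rule rev_image_eqI) simp
qed

lemma wfm_flip: assumes "wfm m" shows "wfm (flip m)"
  unfolding wfm_def
proof (intro conjI allI impI ballI)
  fix u v b assume "(u,v,b) \<in> flip m" thus "u \<noteq> v"
    using assms by (cases b) (auto simp: flip_T flip_F dest: wfm_neq)
next
  fix p q assume "p \<in> flip m" "q \<in> flip m" "p \<noteq> q"
  then obtain p' q' where "p' \<in> m" "q' \<in> m" "p = fl p'" "q = fl q'" by (auto simp: flip_def)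
  moreover hence "p' \<noteq> q'" using \<open>p \<noteq> q\<close> by auto
  ultimately show "ends p \<inter> ends q = {}" using assms by (auto simp: wfm_def)
qed

lemma match_cases:
  obtains (lo) y where "(x,y,True)\<in>m" | (hi) y where "(y,x,True)\<in>m"
   | (sw) y where "(x,y,False)\<in>m \<or> (y,x,False)\<in>m" | (none) "\<And>y b. (x,y,b)\<notin>m \<and> (y,x,b)\<notin>m"
  by (metis (full_types))

lemma ar1: "a \<le> 1 \<Longrightarrow> b \<le> (1::nat) \<Longrightarrow> max a b = 1 - min (1-a) (1-b)" by linarith
lemma ar2: "a \<le> 1 \<Longrightarrow> b \<le> (1::nat) \<Longrightarrow> min a b = 1 - max (1-a) (1-b)" by linarith

lemma step_flip: assumes "wfm m" "\<forall>y. g y \<le> (1::nat)"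
  shows "step (flip m) g x = 1 - step m (\<lambda>y. 1 - g y) x"
proof -
  have w: "wfm (flip m)" using wfm_flip[OF assms(1)] .
  have g: "g y \<le> 1" for y using assms(2) by blast
  show ?thesis
  proof (cases x m rule: match_cases)
    case (lo y)
    hence f: "(y,x,True) \<in> flip m" by (simp add: flip_T)
    have "step (flip m) g x = max (g x) (g y)" unfolding step_gstep by (rule gs_hi[OF w f])
    moreover have "step m (\<lambda>y. 1 - g y) x = min (1 - g x) (1 - g y)" unfolding step_gstep by (rule gs_lo[OF assms(1) lo])
    ultimately show ?thesis using ar1[OF g g] by simp
  next
    case (hi y)
    hence f: "(x,y,True) \<in> flip m" by (simp add: flip_T)
    have "step (flip m) g x = min (g x) (g y)" unfolding step_gstep by (rule gs_lo[OF w f])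
    moreover have "step m (\<lambda>y. 1 - g y) x = max (1 - g x) (1 - g y)" unfolding step_gstep by (rule gs_hi[OF assms(1) hi])
    ultimately show ?thesis using ar2[OF g g] by simp
  next
    case (sw y)
    hence f: "(x,y,False) \<in> flip m \<or> (y,x,False) \<in> flip m" by (simp add: flip_F)
    have "step (flip m) g x = g y" unfolding step_gstep by (rule gs_sw[OF w f])
    moreover have "step m (\<lambda>y. 1 - g y) x = 1 - g y" unfolding step_gstep by (rule gs_sw[OF assms(1) sw])
    ultimately show ?thesis using g[of y] by simp
  next
    case none
    hence f: "(x,y,b)\<notin>flip m \<and> (y,x,b)\<notin>flip m" for y b by (cases b) (auto simp: flip_T flip_F)
    have "step (flip m) g x = g x" unfolding step_gstep by (rule gs_none[OF f])
    moreover have "step m (\<lambda>y. 1 - g y) x = 1 - g x" unfolding step_gstep by (rule gs_none[OF none])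
    ultimately show ?thesis using g[of x] by simp
  qed
qed

lemma run_flip: assumes "\<forall>m\<in>set M. wfm m" "\<forall>y. g y \<le> (1::nat)"
  shows "run (map flip M) g = (\<lambda>x. 1 - run M (\<lambda>y. 1 - g y) x)"
  using assms
proof (induction M arbitrary: g)
  case Nil
  show ?case
  proof
    fix x have "g x \<le> 1" using Nil.prems(2) by blast
    thus "run (map flip []) g x = 1 - run [] (\<lambda>y. 1 - g y) x" by simp
  qed
next
  case (Cons m M)
  have w: "wfm m" using Cons.prems by simp
  have le: "\<forall>y. step (flip m) g y \<le> 1" by (intro allI step_le Cons.prems(2))
  have e: "(\<lambda>y. 1 - step (flip m) g y) = step m (\<lambda>y. 1 - g y)"
  proof
    fix y
    have "step m (\<lambda>y. 1 - g y) y \<le> 1" by (rule step_le) auto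
    thus "1 - step (flip m) g y = step m (\<lambda>y. 1 - g y) y"
      using step_flip[OF w Cons.prems(2), of y] by linarith
  qed
  have ih: "run (map flip M) (step (flip m) g) = (\<lambda>x. 1 - run M (\<lambda>y. 1 - step (flip m) g y) x)"
    using Cons.IH[OF _ le] Cons.prems(1) by simp
  show ?case unfolding list.map(2) run_Cons ih e ..
qed

definition lift :: "'j set \<Rightarrow> ('j \<Rightarrow> 'a \<Rightarrow> 'c) \<Rightarrow> ('j \<Rightarrow> 'a dmatching) \<Rightarrow> 'c dmatching" where
  "lift J \<iota> mm = {(\<iota> j a, \<iota> j b, bo) | j a b bo. j \<in> J \<and> (a,b,bo) \<in> mm j}"

definition goodemb :: "'j set \<Rightarrow> ('j \<Rightarrow> 'a \<Rightarrow> 'c) \<Rightarrow> bool" where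
  "goodemb J \<iota> \<longleftrightarrow> (\<forall>j\<in>J. \<forall>j'\<in>J. \<forall>a a'. \<iota> j a = \<iota> j' a' \<longrightarrow> j = j' \<and> a = a')"

lemma lift_mem: "j \<in> J \<Longrightarrow> (a,b,bo) \<in> mm j \<Longrightarrow> (\<iota> j a, \<iota> j b, bo) \<in> lift J \<iota> mm"
  unfolding lift_def by blast

lemma lift_memD: "(x,y,bo) \<in> lift J \<iota> mm \<Longrightarrow> \<exists>j a b. j \<in> J \<and> (a,b,bo) \<in> mm j \<and> x = \<iota> j a \<and> y = \<iota> j b"
  unfolding lift_def by blast

lemma wfm_lift: assumes g: "goodemb J \<iota>" and w: "\<forall>j\<in>J. wfm (mm j)" shows "wfm (lift J \<iota> mm)"
  unfolding wfm_def
proof (intro conjI allI impI ballI)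
  fix u v b assume "(u,v,b) \<in> lift J \<iota> mm"
  then obtain j a c where "j \<in> J" "(a,c,b) \<in> mm j" "u = \<iota> j a" "v = \<iota> j c" by (blast dest: lift_memD)
  thus "u \<noteq> v" using g w wfm_neq unfolding goodemb_def by metis
next
  fix p q assume pq: "p \<in> lift J \<iota> mm" "q \<in> lift J \<iota> mm" "p \<noteq> q"
  obtain x y bo where p: "p = (x,y,bo)" by (cases p)
  obtain x' y' bo' where q: "q = (x',y',bo')" by (cases q)
  obtain j a b where j: "j \<in> J" "(a,b,bo) \<in> mm j" "x = \<iota> j a" "y = \<iota> j b" using lift_memD pq(1) p by metis
  obtain j' a' b' where j': "j' \<in> J" "(a',b',bo') \<in> mm j'" "x' = \<iota> j' a'" "y' = \<iota> j' b'" using lift_memD pq(2) q by metis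
  show "ends p \<inter> ends q = {}"
  proof (rule ccontr)
    assume "ends p \<inter> ends q \<noteq> {}"
    then obtain z where z: "z \<in> {x,y}" "z \<in> {x',y'}" using p q by auto
    then obtain c c' where c: "c \<in> {a,b}" "c' \<in> {a',b'}" "\<iota> j c = \<iota> j' c'" using j j' by auto
    hence jj: "j = j'" "c = c'" using g j(1) j'(1) unfolding goodemb_def by blast+
    have "(a,b,bo) = (a',b',bo')" using wfm_uniq'[OF w[rule_format, OF j(1)] j(2), of a' b' bo' c] j'(2) c jj by simp
    hence "p = q" using p q j j' jj by simp
    thus False using pq(3) by simp
  qed
qed

lemma lift_step: assumes g: "goodemb J \<iota>" and w: "\<forall>j\<in>J. wfm (mm j)" and j: "j \<in> J"
  shows "gstep lo hi (lift J \<iota> mm) F (\<iota> j a) = gstep lo hi (mm j) (\<lambda>b. F (\<iota> j b)) a"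
proof -
  have W: "wfm (lift J \<iota> mm)" using wfm_lift[OF g w] .
  have wj: "wfm (mm j)" using w j by blast
  show ?thesis
  proof (cases a "mm j" rule: match_cases)
    case (lo y) thus ?thesis using gs_lo[OF W lift_mem[where mm=mm and \<iota>=\<iota>, OF j lo], of lo hi F] gs_lo[OF wj lo, of lo hi "\<lambda>b. F (\<iota> j b)"] by simp
  next
    case (hi y) thus ?thesis using gs_hi[OF W lift_mem[where mm=mm and \<iota>=\<iota>, OF j hi], of lo hi F] gs_hi[OF wj hi, of lo hi "\<lambda>b. F (\<iota> j b)"] by simp
  next
    case (sw y)
    hence L: "(\<iota> j a, \<iota> j y, False) \<in> lift J \<iota> mm \<or> (\<iota> j y, \<iota> j a, False) \<in> lift J \<iota> mm"
      using lift_mem[where mm=mm and \<iota>=\<iota>, OF j] by blast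
    show ?thesis using gs_sw[OF W L, of lo hi F] gs_sw[OF wj sw, of lo hi "\<lambda>b. F (\<iota> j b)"] by simp
  next
    case none
    have "(\<iota> j a, y, b) \<notin> lift J \<iota> mm \<and> (y, \<iota> j a, b) \<notin> lift J \<iota> mm" for y b
    proof (intro conjI notI)
      assume "(\<iota> j a, y, b) \<in> lift J \<iota> mm"
      then obtain j' a' b' where "j' \<in> J" "(a',b',b) \<in> mm j'" "\<iota> j a = \<iota> j' a'" by (blast dest: lift_memD)
      thus False using none g j unfolding goodemb_def by metis
    next
      assume "(y, \<iota> j a, b) \<in> lift J \<iota> mm"
      then obtain j' a' b' where "j' \<in> J" "(a',b',b) \<in> mm j'" "\<iota> j a = \<iota> j' b'" by (blast dest: lift_memD)
      thus False using none g j unfolding goodemb_def by metis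
    qed
    thus ?thesis using gs_none[of "\<iota> j a" "lift J \<iota> mm" lo hi F] gs_none[of a "mm j" lo hi "\<lambda>b. F (\<iota> j b)", OF none] by simp
  qed
qed

lemma lift_run: assumes g: "goodemb J \<iota>" and w: "\<forall>m\<in>set M. \<forall>j\<in>J. wfm (\<phi> j m)" and j: "j \<in> J"
  shows "run (map (\<lambda>m. lift J \<iota> (\<lambda>j. \<phi> j m)) M) F (\<iota> j a) = run (map (\<phi> j) M) (\<lambda>b. F (\<iota> j b)) a"
  using w
proof (induction M arbitrary: F)
  case Nil thus ?case by simp
next
  case (Cons m M)
  have e: "(\<lambda>b. step (lift J \<iota> (\<lambda>j. \<phi> j m)) F (\<iota> j b)) = step (\<phi> j m) (\<lambda>b. F (\<iota> j b))"
    using lift_step[OF g _ j, of "\<lambda>j. \<phi> j m" min max F] Cons.prems unfolding step_gstep by auto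
  show ?case using Cons.IH[of "step (lift J \<iota> (\<lambda>j. \<phi> j m)) F"] Cons.prems e by simp
qed



definition sig :: "'a dmatching \<Rightarrow> ('a \<Rightarrow> nat) \<Rightarrow> 'a \<Rightarrow> 'a" where
  "sig s g = gstep (\<lambda>a b. if g a \<le> g b then a else b) (\<lambda>a b. if g b \<le> g a then a else b) s id"

lemma sig_step: assumes w: "wfm s" shows "step s g u = g (sig s g u)"
proof (cases u s rule: match_cases)
  case (lo v) thus ?thesis unfolding sig_def step_gstep gs_lo[OF w lo] by (simp add: min_def)
next
  case (hi v) thus ?thesis unfolding sig_def step_gstep gs_hi[OF w hi] by (simp add: max_def)
next
  case (sw v) thus ?thesis unfolding sig_def step_gstep gs_sw[OF w sw] by simp
next
  case none thus ?thesis unfolding sig_def step_gstep gs_none[OF none] by simp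
qed

lemma sig_sig: assumes w: "wfm s" shows "sig s g (sig s g u) = u"
proof (cases u s rule: match_cases)
  case (lo v)
  have "sig s g u = (if g u \<le> g v then u else v)" unfolding sig_def gs_lo[OF w lo] by simp
  moreover have "sig s g v = (if g u \<le> g v then v else u)" unfolding sig_def gs_hi[OF w lo] by simp
  ultimately show ?thesis by auto
next
  case (hi v)
  have "sig s g u = (if g v \<le> g u then u else v)" unfolding sig_def gs_hi[OF w hi] by simp
  moreover have "sig s g v = (if g v \<le> g u then v else u)" unfolding sig_def gs_lo[OF w hi] by simp
  ultimately show ?thesis by auto
next
  case (sw v)
  have "sig s g u = v" unfolding sig_def gs_sw[OF w sw] by simp
  moreover have "(v,u,False)\<in>s \<or> (u,v,False)\<in>s" using sw by blast
  hence "sig s g v = u" unfolding sig_def by (subst gs_sw[OF w]) simp_all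
  ultimately show ?thesis by auto
next
  case none thus ?thesis unfolding sig_def by (simp add: gs_none[OF none])
qed

definition inV :: "'a set \<Rightarrow> 'a dmatching \<Rightarrow> bool" where
  "inV V s \<longleftrightarrow> (\<forall>u v b. (u,v,b) \<in> s \<longrightarrow> u \<in> V \<and> v \<in> V)"

lemma sig_in: assumes w: "wfm s" and iv: "inV V s" and u: "u \<in> V" shows "sig s g u \<in> V"
proof (cases u s rule: match_cases)
  case (lo v) thus ?thesis using iv u unfolding sig_def gs_lo[OF w lo] inV_def by auto
next
  case (hi v) thus ?thesis using iv u unfolding sig_def gs_hi[OF w hi] inV_def by auto
next
  case (sw v) thus ?thesis using iv u unfolding sig_def gs_sw[OF w sw] inV_def by auto
next
  case none thus ?thesis using u unfolding sig_def gs_none[OF none] by simp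
qed

lemma step_sum: assumes w: "wfm s" and iv: "inV V s"
  shows "(\<Sum>u\<in>V. step s g u) = (\<Sum>u\<in>V. g u)"
proof -
  have b: "bij_betw (sig s g) V V"
    by (rule bij_betw_byWitness[where f'="sig s g"]) (auto simp: sig_sig[OF w] sig_in[OF w iv])
  have "(\<Sum>u\<in>V. step s g u) = (\<Sum>u\<in>V. g (sig s g u))" by (simp add: sig_step[OF w])
  also have "\<dots> = (\<Sum>u\<in>V. g u)" using sum.reindex_bij_betw[OF b, of g] .
  finally show ?thesis .
qed

lemma run_sum: assumes "\<forall>s\<in>set M. wfm s \<and> inV V s"
  shows "(\<Sum>u\<in>V. run M g u) = (\<Sum>u\<in>V. g u)"
  using assms
proof (induction M arbitrary: g)
  case Nil thus ?case by simp
next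
  case (Cons s M) thus ?case using step_sum[of s V g] by simp
qed

definition mstep :: "nat \<Rightarrow> 'a dmatching \<Rightarrow> ('a \<Rightarrow> nat) \<Rightarrow> 'a \<Rightarrow> nat" where
  "mstep n s = gstep (\<lambda>a b. a + b - n) (\<lambda>a b. min n (a + b)) s"

definition mrun :: "nat \<Rightarrow> 'a dmatching list \<Rightarrow> ('a \<Rightarrow> nat) \<Rightarrow> 'a \<Rightarrow> nat" where
  "mrun n M c = foldl (\<lambda>c s. mstep n s c) c M"

lemma mrun_Nil[simp]: "mrun n [] c = c" by (simp add: mrun_def)
lemma mrun_Cons[simp]: "mrun n (s#M) c = mrun n M (mstep n s c)" by (simp add: mrun_def)
lemma mrun_snoc: "mrun n (M@[s]) c = mstep n s (mrun n M c)" by (simp add: mrun_def)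

lemma mstep_le: assumes w: "wfm s" and c: "\<forall>u. c u \<le> n" shows "mstep n s c u \<le> n"
proof (cases u s rule: match_cases)
  case (lo v) thus ?thesis using c unfolding mstep_def gs_lo[OF w lo] by (metis add_diff_cancel_right' add_le_mono diff_le_mono)
next
  case (hi v) thus ?thesis unfolding mstep_def gs_hi[OF w hi] by simp
next
  case (sw v) thus ?thesis using c unfolding mstep_def gs_sw[OF w sw] by simp
next
  case none thus ?thesis using c unfolding mstep_def gs_none[OF none] by simp
qed

definition bal :: "'a set \<Rightarrow> nat \<Rightarrow> (nat \<Rightarrow> 'a \<Rightarrow> nat) \<Rightarrow> bool" where
  "bal V n x \<longleftrightarrow> (\<exists>s. \<forall>k<n. (\<Sum>u\<in>V. x k u) = s \<or> (\<Sum>u\<in>V. x k u) = Suc s)"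

lemma sum_ind: "A \<subseteq> {..<(n::nat)} \<Longrightarrow> (\<Sum>k<n. if k \<in> A then 1 else 0) = (card A :: nat)"
proof -
  assume A: "A \<subseteq> {..<n}"
  have "(\<Sum>k<n. if k \<in> A then 1 else (0::nat)) = (\<Sum>k\<in>{..<n} \<inter> {k. k \<in> A}. 1) + (\<Sum>k\<in>{..<n} \<inter> - {k. k \<in> A}. 0)"
    by (rule sum.If_cases) simp
  also have "{..<n} \<inter> {k. k \<in> A} = A" using A by auto
  finally show ?thesis by simp
qed

lemma exists_bal: assumes fin: "finite V" and c: "\<forall>u. c u \<le> n"
  shows "\<exists>x. (\<forall>k<n. \<forall>u. x k u \<le> 1) \<and> (\<forall>u. (\<Sum>k<n. x k u) = c u) \<and> bal V n x"
  using fin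
proof (induction V rule: finite_induct)
  case empty
  define x where "x k u = (if k \<in> {..<c u} then 1 else (0::nat))" for k u
  have "(\<Sum>k<n. x k u) = c u" for u
    unfolding x_def using sum_ind[of "{..<c u}" n] c by auto
  moreover have "bal {} n x" by (simp add: bal_def)
  ultimately show ?case by (intro exI[of _ x]) (auto simp: x_def bal_def)
next
  case (insert w F)
  obtain x where x1: "\<forall>k<n. \<forall>u. x k u \<le> 1" and x2: "\<forall>u. (\<Sum>k<n. x k u) = c u" and x3: "bal F n x"
    using insert.IH by blast
  obtain s where s: "\<forall>k<n. (\<Sum>u\<in>F. x k u) = s \<or> (\<Sum>u\<in>F. x k u) = Suc s" using x3 unfolding bal_def by blast
  define S where "S k = (\<Sum>u\<in>F. x k u)" for k
  define L where "L = {k. k < n \<and> S k = s}"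
  have Ln: "L \<subseteq> {..<n}" "finite L" by (auto simp: L_def)
  obtain A where A: "A \<subseteq> {..<n}" "card A = c w"
    and Abal: "\<exists>t. \<forall>k<n. S k + (if k \<in> A then 1 else 0) = t \<or> S k + (if k \<in> A then 1 else 0) = Suc t"
  proof (cases "c w \<le> card L")
    case True
    then obtain A where "A \<subseteq> L" "card A = c w" by (rule obtain_subset_with_card_n)
    moreover have "\<forall>k<n. S k + (if k \<in> A then 1 else 0) = s \<or> S k + (if k \<in> A then 1 else 0) = Suc s"
      using s \<open>A \<subseteq> L\<close> unfolding S_def L_def by auto
    ultimately show ?thesis using that Ln by blast
  next
    case False
    have "card ({..<n} - L) = n - card L" using Ln by (simp add: card_Diff_subset)
    moreover have "card L \<le> n" using Ln card_mono[of "{..<n}" L] by simp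
    ultimately have "c w - card L \<le> card ({..<n} - L)" using c by (metis diff_le_mono)
    then obtain B where B: "B \<subseteq> {..<n} - L" "card B = c w - card L" by (rule obtain_subset_with_card_n)
    have fB: "finite B" using B(1) finite_subset by blast
    have "card (L \<union> B) = c w" using B False Ln fB by (subst card_Un_disjoint) auto
    moreover have "L \<union> B \<subseteq> {..<n}" using B Ln by auto
    moreover have "\<forall>k<n. S k + (if k \<in> L \<union> B then 1 else 0) = Suc s \<or> S k + (if k \<in> L \<union> B then 1 else 0) = Suc (Suc s)"
      using s B unfolding S_def L_def by auto
    ultimately show ?thesis using that by blast
  qed
  define x' where "x' k u = (if u = w then (if k \<in> A then 1 else 0) else x k u)" for k u
  have "\<forall>k<n. \<forall>u. x' k u \<le> 1" using x1 by (simp add: x'_def)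
  moreover have "\<forall>u. (\<Sum>k<n. x' k u) = c u"
  proof
    fix u show "(\<Sum>k<n. x' k u) = c u"
    proof (cases "u = w")
      case True thus ?thesis using sum_ind[OF A(1)] A(2) by (simp add: x'_def)
    next
      case False thus ?thesis using x2 by (simp add: x'_def)
    qed
  qed
  moreover have "bal (insert w F) n x'"
  proof -
    have "(\<Sum>u\<in>insert w F. x' k u) = S k + (if k \<in> A then 1 else 0)" for k
    proof -
      have "(\<Sum>u\<in>F. x' k u) = S k" unfolding S_def x'_def using insert.hyps(2) by (intro sum.cong) auto
      thus ?thesis using insert.hyps by (simp add: x'_def)
    qed
    thus ?thesis using Abal unfolding bal_def by simp
  qed
  ultimately show ?case by blast
qed



lemma all_one: assumes y: "\<forall>j<(n::nat). y j \<le> (1::nat)" and s: "(\<Sum>j<n. y j) = n" and k: "k < n"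
  shows "y k = 1"
proof (rule ccontr)
  assume "y k \<noteq> 1" hence y0: "y k = 0" using y k by (meson le_neq_implies_less less_one)
  have "(\<Sum>j<n. y j) = y k + (\<Sum>j\<in>{..<n}-{k}. y j)" using k by (simp add: sum.remove)
  also have "(\<Sum>j\<in>{..<n}-{k}. y j) \<le> of_nat (card ({..<n}-{k})) * 1"
    by (rule sum_bounded_above) (use y in auto)
  also have "card ({..<n}-{k}) = n - 1" using k by simp
  finally show False using s y0 k by simp
qed

lemma card01: assumes "\<forall>k<(n::nat). y k \<le> (1::nat)" shows "card {k. k < n \<and> y k = 1} = (\<Sum>k<n. y k)"
proof -
  have "(\<Sum>k<n. y k) = (\<Sum>k<n. if y k = 1 then 1 else 0)"
    using assms by (intro sum.cong) (auto simp: le_Suc_eq)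
  also have "\<dots> = (\<Sum>k<n. if k \<in> {k. k < n \<and> y k = 1} then 1 else 0)" by (intro sum.cong) auto
  also have "\<dots> = card {k. k < n \<and> y k = 1}"
    by (rule sum_ind) auto
  finally show ?thesis by simp
qed

lemma card01V: assumes "finite V" "\<forall>u\<in>V. y u \<le> (1::nat)" shows "card {u\<in>V. y u = 1} = (\<Sum>u\<in>V. y u)"
proof -
  have "(\<Sum>u\<in>V. y u) = (\<Sum>u\<in>V. if y u = 1 then 1 else 0)"
    using assms by (intro sum.cong) (auto simp: le_Suc_eq)
  also have "\<dots> = (\<Sum>u\<in>{u\<in>V. y u = 1}. 1)" by (rule sum.inter_filter[symmetric]) (rule assms(1))
  finally show ?thesis by simp
qed

lemma pair_facts:
  assumes w: "wfm s" and e: "(p,q,True) \<in> s" and c: "\<forall>u. c u \<le> n"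
    and y1: "\<forall>k<n. \<forall>u. y k u \<le> (1::nat)" and ys: "\<forall>u. (\<Sum>k<n. y k u) = mstep n s c u"
  shows "mstep n s c p = c p + c q - n" "mstep n s c q = min n (c p + c q)"
    "\<forall>k<n. y k p = 1 \<longrightarrow> y k q = 1"
    "\<exists>A. A \<subseteq> {k. k<n \<and> y k p = 0 \<and> y k q = 1} \<and> card A = c p - mstep n s c p"
proof -
  show zp: "mstep n s c p = c p + c q - n" unfolding mstep_def gs_lo[OF w e] ..
  show zq: "mstep n s c q = min n (c p + c q)" unfolding mstep_def gs_hi[OF w e] by (simp add: add.commute)
  show ym: "\<forall>k<n. y k p = 1 \<longrightarrow> y k q = 1"
  proof (intro allI impI)
    fix k assume k: "k < n" and yk: "y k p = 1"
    have "y k p \<le> (\<Sum>j<n. y j p)" using k by (intro member_le_sum) auto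
    hence "1 \<le> mstep n s c p" using ys yk by simp
    hence "mstep n s c q = n" using zp zq by simp
    hence "(\<Sum>j<n. y j q) = n" using ys by simp
    thus "y k q = 1" using all_one[of n "\<lambda>j. y j q" k] y1 k by simp
  qed
  have d: "{k. k<n \<and> y k q = 1} = {k. k<n \<and> y k p = 1} \<union> {k. k<n \<and> y k p = 0 \<and> y k q = 1}"
    using ym y1 by (auto simp: le_Suc_eq)
  have "card {k. k<n \<and> y k q = 1} = card {k. k<n \<and> y k p = 1} + card {k. k<n \<and> y k p = 0 \<and> y k q = 1}"
    unfolding d by (rule card_Un_disjoint) auto
  moreover have "card {k. k<n \<and> y k q = 1} = mstep n s c q" using card01[of n "\<lambda>k. y k q"] y1 ys by simp
  moreover have "card {k. k<n \<and> y k p = 1} = mstep n s c p" using card01[of n "\<lambda>k. y k p"] y1 ys by simp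
  ultimately have cQ: "card {k. k<n \<and> y k p = 0 \<and> y k q = 1} = mstep n s c q - mstep n s c p"
    by linarith
  have "c p - mstep n s c p \<le> mstep n s c q - mstep n s c p"
    using zp zq c[rule_format, of p] c[rule_format, of q] by simp
  hence "c p - mstep n s c p \<le> card {k. k<n \<and> y k p = 0 \<and> y k q = 1}" using cQ by simp
  then obtain A where "A \<subseteq> {k. k<n \<and> y k p = 0 \<and> y k q = 1}" "card A = c p - mstep n s c p"
    by (rule obtain_subset_with_card_n)
  thus "\<exists>A. A \<subseteq> {k. k<n \<and> y k p = 0 \<and> y k q = 1} \<and> card A = c p - mstep n s c p" by blast
qed



definition role :: "'a dmatching \<Rightarrow> 'a \<Rightarrow> 'a \<times> 'a \<times> nat" where
  "role s = gstep (\<lambda>a b. (fst a, fst b, 1)) (\<lambda>a b. (fst a, fst b, 2)) s (\<lambda>w. (w, w, 0))"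

lemma role_lo: "wfm s \<Longrightarrow> (u,v,True) \<in> s \<Longrightarrow> role s u = (u,v,1)"
  unfolding role_def by (simp add: gs_lo)
lemma role_hi: "wfm s \<Longrightarrow> (v,u,True) \<in> s \<Longrightarrow> role s u = (u,v,2)"
  unfolding role_def by (simp add: gs_hi)
lemma role_sw: "wfm s \<Longrightarrow> (u,v,False) \<in> s \<or> (v,u,False) \<in> s \<Longrightarrow> role s u = (v,v,0)"
  unfolding role_def by (simp add: gs_sw)
lemma role_none: "(\<And>y b. (u,y,b)\<notin>s \<and> (y,u,b)\<notin>s) \<Longrightarrow> role s u = (u,u,0)"
  unfolding role_def by (simp add: gs_none)

lemma layer:
  assumes M: "\<forall>s\<in>set M. wfm s \<and> inV V s" and fin: "finite V" and c: "\<forall>u. c u \<le> n"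
  shows "\<exists>x. (\<forall>k<n. \<forall>u. x k u \<le> 1) \<and> (\<forall>u. (\<Sum>k<n. x k u) = c u) \<and> bal V n x \<and>
             (\<forall>u. mrun n M c u = (\<Sum>k<n. run M (x k) u))"
  using M c
proof (induction M arbitrary: c)
  case Nil
  obtain x where "\<forall>k<n. \<forall>u. x k u \<le> 1" "\<forall>u. (\<Sum>k<n. x k u) = c u" "bal V n x"
    using exists_bal[OF fin Nil.prems(2)] by blast
  thus ?case by (intro exI[of _ x]) simp
next
  case (Cons s M)
  have w: "wfm s" and iv: "inV V s" using Cons.prems by auto
  define z where "z = mstep n s c"
  have zle: "\<forall>u. z u \<le> n" unfolding z_def using mstep_le[OF w Cons.prems(2)] by blast
  obtain y where y1: "\<forall>k<n. \<forall>u. y k u \<le> 1" and ys: "\<forall>u. (\<Sum>k<n. y k u) = z u" and yb: "bal V n y"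
    and yr: "\<forall>u. mrun n M z u = (\<Sum>k<n. run M (y k) u)"
    using Cons.IH[OF _ zle] Cons.prems(1) by auto
  define A where "A p q = (SOME A. A \<subseteq> {k. k<n \<and> y k p = 0 \<and> y k q = 1} \<and> card A = c p - z p)" for p q
  have Ap: "A p q \<subseteq> {k. k<n \<and> y k p = 0 \<and> y k q = 1} \<and> card (A p q) = c p - z p"
    and zp: "z p = c p + c q - n" and zq: "z q = min n (c p + c q)"
    and ym: "\<forall>k<n. y k p = 1 \<longrightarrow> y k q = 1"
    if e: "(p,q,True) \<in> s" for p q
  proof -
    note pf = pair_facts[OF w e Cons.prems(2) y1 ys[unfolded z_def]]
    show "A p q \<subseteq> {k. k<n \<and> y k p = 0 \<and> y k q = 1} \<and> card (A p q) = c p - z p"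
      unfolding A_def z_def by (rule someI_ex) (rule pf(4))
    show "z p = c p + c q - n" unfolding z_def by (rule pf(1))
    show "z q = min n (c p + c q)" unfolding z_def by (rule pf(2))
    show "\<forall>k<n. y k p = 1 \<longrightarrow> y k q = 1" by (rule pf(3))
  qed
  define x where "x k u = (case role s u of (p,q,t) \<Rightarrow>
      if t = 1 then y k p + (if k \<in> A p q then 1 else 0)
      else if t = 2 then y k p - (if k \<in> A q p then 1 else 0) else y k p)" for k u
  have xlo: "x k u = y k u + (if k \<in> A u v then 1 else 0)" if "(u,v,True)\<in>s" for k u v
    unfolding x_def role_lo[OF w that] by simp
  have xhi: "x k u = y k u - (if k \<in> A v u then 1 else 0)" if "(v,u,True)\<in>s" for k u v
    unfolding x_def role_hi[OF w that] by simp
  have xsw: "x k u = y k v" if "(u,v,False) \<in> s \<or> (v,u,False) \<in> s" for k u v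
    unfolding x_def role_sw[OF w that] by simp
  have xno: "x k u = y k u" if "\<And>v b. (u,v,b)\<notin>s \<and> (v,u,b)\<notin>s" for k u
    unfolding x_def role_none[OF that] by simp
  have stepx: "step s (x k) u = y k u" if k: "k < n" for k u
  proof (cases u s rule: match_cases)
    case (lo v)
    have s1: "step s (x k) u = min (x k u) (x k v)" unfolding step_gstep by (rule gs_lo[OF w lo])
    show ?thesis
    proof (cases "k \<in> A u v")
      case True
      hence "y k u = 0" "y k v = 1" using Ap[OF lo] by auto
      thus ?thesis using s1 xlo[OF lo, of k] xhi[OF lo, of k] True by simp
    next
      case False
      have a: "y k u \<le> 1" "y k v \<le> 1" "y k u = 1 \<longrightarrow> y k v = 1" using y1 k ym[OF lo] by auto
      hence "y k u \<le> y k v" by (auto simp: le_Suc_eq)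
      thus ?thesis using s1 xlo[OF lo, of k] xhi[OF lo, of k] False by simp
    qed
  next
    case (hi v)
    have s1: "step s (x k) u = max (x k u) (x k v)" unfolding step_gstep by (rule gs_hi[OF w hi])
    show ?thesis
    proof (cases "k \<in> A v u")
      case True
      hence "y k v = 0" "y k u = 1" using Ap[OF hi] by auto
      thus ?thesis using s1 xlo[OF hi, of k] xhi[OF hi, of k] True by simp
    next
      case False
      have a: "y k u \<le> 1" "y k v \<le> 1" "y k v = 1 \<longrightarrow> y k u = 1" using y1 k ym[OF hi] by auto
      hence "y k v \<le> y k u" by (auto simp: le_Suc_eq)
      thus ?thesis using s1 xlo[OF hi, of k] xhi[OF hi, of k] False by simp
    qed
  next
    case (sw v)
    have s1: "step s (x k) u = x k v" unfolding step_gstep by (rule gs_sw[OF w sw])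
    have sw': "(v,u,False) \<in> s \<or> (u,v,False) \<in> s" using sw by blast
    show ?thesis using s1 xsw[OF sw', of k] by simp
  next
    case none
    have s1: "step s (x k) u = x k u" unfolding step_gstep by (rule gs_none[OF none])
    thus ?thesis using xno[OF none] by simp
  qed
  have x1: "x k u \<le> 1" if k: "k < n" for k u
  proof (cases u s rule: match_cases)
    case (lo v) thus ?thesis using xlo[OF lo, of k] Ap[OF lo] y1 k by auto
  next
    case (hi v)
    have "x k u \<le> y k u" using xhi[OF hi, of k] by simp
    moreover have "y k u \<le> 1" using y1 k by auto
    ultimately show ?thesis by (rule le_trans)
  next
    case (sw v) thus ?thesis using xsw[OF sw, of k] y1 k by simp
  next
    case none thus ?thesis using xno[OF none, of k] y1 k by simp
  qed
  have xs: "(\<Sum>k<n. x k u) = c u" for u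
  proof (cases u s rule: match_cases)
    case (lo v)
    have "(\<Sum>k<n. x k u) = (\<Sum>k<n. y k u) + (\<Sum>k<n. if k \<in> A u v then 1 else 0)"
      using xlo[OF lo] by (simp add: sum.distrib)
    also have "(\<Sum>k<n. if k \<in> A u v then 1 else 0) = card (A u v)"
      by (rule sum_ind) (use Ap[OF lo] in auto)
    finally show ?thesis using Ap[OF lo] ys zp[OF lo] Cons.prems(2) by (simp add: le_diff_conv)
  next
    case (hi v)
    have le: "(if k \<in> A v u then 1 else 0) \<le> y k u" if "k<n" for k using Ap[OF hi] by auto
    have "(\<Sum>k<n. x k u) = (\<Sum>k<n. y k u - (if k \<in> A v u then 1 else 0))"
      using xhi[OF hi] by simp
    also have "\<dots> = (\<Sum>k<n. y k u) - (\<Sum>k<n. if k \<in> A v u then 1 else 0)"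
      by (rule sum_subtractf_nat) (use le in auto)
    also have "(\<Sum>k<n. if k \<in> A v u then 1 else 0) = card (A v u)"
      by (rule sum_ind) (use Ap[OF hi] in auto)
    finally have "(\<Sum>k<n. x k u) = z u - (c v - z v)" using ys Ap[OF hi] by simp
    thus ?thesis using zp[OF hi] zq[OF hi] Cons.prems(2)[rule_format, of u] Cons.prems(2)[rule_format, of v]
      by (simp add: min_def split: if_splits)
  next
    case (sw v)
    have "(\<Sum>k<n. x k u) = z v" using xsw[OF sw] ys by simp
    moreover have "z v = c u" unfolding z_def mstep_def
      by (rule gs_sw[OF w]) (use sw in blast)
    ultimately show ?thesis by simp
  next
    case none
    have "z u = c u" unfolding z_def mstep_def by (rule gs_none[OF none])
    thus ?thesis using xno[OF none] ys by simp
  qed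
  have xb: "bal V n x"
  proof -
    have "(\<Sum>u\<in>V. x k u) = (\<Sum>u\<in>V. y k u)" if "k < n" for k
    proof -
      have "(\<Sum>u\<in>V. x k u) = (\<Sum>u\<in>V. step s (x k) u)" using step_sum[OF w iv] by simp
      also have "\<dots> = (\<Sum>u\<in>V. y k u)" using stepx[OF that] by simp
      finally show ?thesis .
    qed
    thus ?thesis using yb unfolding bal_def by simp
  qed
  have xr: "mrun n (s#M) c u = (\<Sum>k<n. run (s#M) (x k) u)" for u
  proof -
    have "mrun n (s#M) c u = (\<Sum>k<n. run M (y k) u)" using yr z_def by simp
    also have "\<dots> = (\<Sum>k<n. run M (step s (x k)) u)"
    proof (rule sum.cong)
      fix k assume "k \<in> {..<n}"
      hence "step s (x k) = y k" using stepx by auto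
      thus "run M (y k) u = run M (step s (x k)) u" by simp
    qed simp
    finally show ?thesis by simp
  qed
  show ?case using x1 xs xb xr by blast
qed



lemma card_bij_filter: assumes "bij_betw f A B" shows "card {x\<in>A. P (f x)} = card {k\<in>B. P k}"
proof -
  have "f ` {x\<in>A. P (f x)} = {k\<in>B. P k}" using assms by (auto simp: bij_betw_def)
  moreover have "inj_on f {x\<in>A. P (f x)}" using assms by (auto simp: bij_betw_def inj_on_def)
  ultimately show ?thesis using card_image by metis
qed

lemma card_int1: "b \<le> n \<Longrightarrow> card {k\<in>{1..n}. a < k \<and> k \<le> (b::nat)} = b - a"
proof -
  assume "b \<le> n"
  hence "{k\<in>{1..n}. a < k \<and> k \<le> b} = {a<..b}" by auto
  thus ?thesis by simp
qed

lemma card_top: "c \<le> n \<Longrightarrow> card {k\<in>{1..n}. n - c < (k::nat)} = c"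
proof -
  assume c: "c \<le> n"
  have "{k\<in>{1..n}. n - c < (k::nat)} = {k\<in>{1..n}. n - c < k \<and> k \<le> n}" by auto
  thus ?thesis using card_int1[of n n "n - c"] c by simp
qed

lemma card_bot: "c \<le> n \<Longrightarrow> card {k\<in>{1..n}. (k::nat) \<le> c} = c"
proof -
  assume c: "c \<le> n"
  have "{k\<in>{1..n}. (k::nat) \<le> c} = {k\<in>{1..n}. 0 < k \<and> k \<le> c}" by auto
  thus ?thesis using card_int1[of c n 0] c by simp
qed

lemma card_union: assumes "a \<le> n" "b \<le> (n::nat)" shows "card {k\<in>{1..n}. k \<le> a \<or> n - b < k} = min n (a + b)"
proof -
  have "{k\<in>{1..n}. k \<le> a \<or> n - b < k} = {1..n} - {k\<in>{1..n}. a < k \<and> k \<le> n - b}" by auto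
  moreover have "card ({1..n} - {k\<in>{1..n}. a < k \<and> k \<le> n - b}) = card {1..n} - card {k\<in>{1..n}. a < k \<and> k \<le> n - b}"
    by (rule card_Diff_subset) auto
  ultimately have "card {k\<in>{1..n}. k \<le> a \<or> n - b < k} = n - card {k\<in>{1..n}. a < k \<and> k \<le> n - b}"
    by simp
  also have "\<dots> = n - (n - b - a)" using card_int1[of "n-b" n a] by simp
  finally show ?thesis using assms by simp
qed

locale prodctx =
  fixes V1 :: "'a set" and V2 :: "'b set" and M1 :: "'a dmatching list" and M2 :: "'b dmatching list"
    and \<pi>1 :: "'a \<Rightarrow> nat" and \<pi>2 :: "'b \<Rightarrow> nat"
  assumes fin1: "finite V1" and fin2: "finite V2"
    and w1: "\<forall>m\<in>set M1. wfm m \<and> inV V1 m" and w2: "\<forall>m\<in>set M2. wfm m \<and> inV V2 m"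
    and s1: "\<forall>f. bij_betw f V1 {1..card V1} \<longrightarrow> (\<forall>x\<in>V1. run M1 f x = \<pi>1 x)"
    and s2: "\<forall>f. bij_betw f V2 {1..card V2} \<longrightarrow> (\<forall>x\<in>V2. run M2 f x = \<pi>2 x)"
    and b1: "bij_betw \<pi>1 V1 {1..card V1}" and b2: "bij_betw \<pi>2 V2 {1..card V2}"
begin

abbreviation "n1 \<equiv> card V1"
abbreviation "n2 \<equiv> card V2"

definition colphase :: "('a \<Rightarrow> bool) \<Rightarrow> ('a \<times> 'b) dmatching list" where
  "colphase d = map (\<lambda>m. lift V1 (\<lambda>u y. (u,y)) (\<lambda>u. if d u then m else flip m)) M2"

definition rowst :: "'a dmatching \<Rightarrow> ('a \<times> 'b) dmatching" where
  "rowst m = lift V2 (\<lambda>x v. (v,x)) (\<lambda>x. m)"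

definition dirs :: "nat \<Rightarrow> 'a \<Rightarrow> bool" where
  "dirs i u = (if i < length M1 then (\<exists>y. (u,y,True) \<in> M1!i) else True)"

definition cnt :: "('a \<times> 'b \<Rightarrow> nat) \<Rightarrow> 'a \<Rightarrow> nat" where
  "cnt F u = card {x\<in>V2. F (u,x) = 1}"

definition colsorted :: "('a \<Rightarrow> bool) \<Rightarrow> ('a \<Rightarrow> nat) \<Rightarrow> ('a \<times> 'b \<Rightarrow> nat) \<Rightarrow> bool" where
  "colsorted d c F \<longleftrightarrow> (\<forall>u\<in>V1. \<forall>x\<in>V2. F (u,x) =
     (if d u then (if n2 - c u < \<pi>2 x then 1 else 0) else (if \<pi>2 x \<le> c u then 1 else 0)))"

lemma ge1: "goodemb V1 (\<lambda>u y. (u,y))" by (simp add: goodemb_def)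
lemma ge2: "goodemb V2 (\<lambda>x v. (v,x))" by (simp add: goodemb_def)

lemma cnt_le: "cnt F u \<le> n2"
  unfolding cnt_def using fin2 by (intro card_mono) auto

lemma sort2_01: assumes "\<forall>y. g y \<le> (1::nat)" "x \<in> V2"
  shows "run M2 g x = (if n2 - card {y\<in>V2. g y = 1} < \<pi>2 x then 1 else 0)"
  using sort01[OF fin2 s2 assms(1)] assms(2) by blast

lemma colphase_run: assumes zo: "\<forall>z. F z \<le> (1::nat)" and u: "u \<in> V1" and x: "x \<in> V2"
  shows "run (colphase d) F (u,x) =
     (if d u then (if n2 - cnt F u < \<pi>2 x then 1 else 0) else (if \<pi>2 x \<le> cnt F u then 1 else 0))"
proof -
  have w: "\<forall>m\<in>set M2. \<forall>j\<in>V1. wfm ((\<lambda>u m. if d u then m else flip m) j m)"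
    using w2 wfm_flip by auto
  have "run (colphase d) F (u,x) = run (map (\<lambda>m. if d u then m else flip m) M2) (\<lambda>y. F (u,y)) x"
    unfolding colphase_def using lift_run[OF ge1 w u, of F x] by simp
  also have "\<dots> = (if d u then (if n2 - cnt F u < \<pi>2 x then 1 else 0) else (if \<pi>2 x \<le> cnt F u then 1 else 0))"
  proof (cases "d u")
    case True
    thus ?thesis using sort2_01[of "\<lambda>y. F (u,y)" x] zo x by (simp add: cnt_def)
  next
    case False
    have g1: "\<forall>y. F (u,y) \<le> 1" using zo by simp
    have wm: "\<forall>m\<in>set M2. wfm m" using w2 by simp
    have "run (map flip M2) (\<lambda>y. F (u,y)) x = 1 - run M2 (\<lambda>y. 1 - F (u,y)) x"
      using run_flip[OF wm g1] by simp
    also have "run M2 (\<lambda>y. 1 - F (u,y)) x = (if n2 - card {y\<in>V2. 1 - F (u,y) = 1} < \<pi>2 x then 1 else 0)"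
      by (rule sort2_01) (use x in auto)
    also have "card {y\<in>V2. 1 - F (u,y) = 1} = n2 - cnt F u"
    proof -
      have "1 - F (u,y) = 1 \<longleftrightarrow> F (u,y) \<noteq> 1" for y using g1[rule_format, of y] by auto
      hence "{y\<in>V2. 1 - F (u,y) = 1} = V2 - {y\<in>V2. F (u,y) = 1}" by auto
      thus ?thesis unfolding cnt_def using fin2 by (simp add: card_Diff_subset)
    qed
    finally have "run (map flip M2) (\<lambda>y. F (u,y)) x = (if \<pi>2 x \<le> cnt F u then 1 else 0)"
      using cnt_le[of F u] by auto
    thus ?thesis using False by simp
  qed
  finally show ?thesis .
qed

lemma colphase_sorted: assumes zo: "\<forall>z. F z \<le> (1::nat)"
  shows "colsorted d (cnt F) (run (colphase d) F)"
  unfolding colsorted_def using colphase_run[OF zo] by simp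

lemma colsorted_cnt: assumes cs: "colsorted d c F" and c: "c u \<le> n2" and u: "u \<in> V1"
  shows "cnt F u = c u"
proof (cases "d u")
  case True
  have Fx: "F (u,x) = (if n2 - c u < \<pi>2 x then 1 else 0)" if "x\<in>V2" for x
    using cs u True that unfolding colsorted_def by simp
  have "cnt F u = card {x\<in>V2. n2 - c u < \<pi>2 x}"
    unfolding cnt_def by (intro arg_cong[where f=card]) (auto simp: Fx split: if_splits)
  also have "\<dots> = card {k\<in>{1..n2}. n2 - c u < k}" by (rule card_bij_filter[OF b2])
  finally show ?thesis using card_top[OF c] by simp
next
  case False
  have Fx: "F (u,x) = (if \<pi>2 x \<le> c u then 1 else 0)" if "x\<in>V2" for x
    using cs u False that unfolding colsorted_def by simp
  have "cnt F u = card {x\<in>V2. \<pi>2 x \<le> c u}"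
    unfolding cnt_def by (intro arg_cong[where f=card]) (auto simp: Fx split: if_splits)
  also have "\<dots> = card {k\<in>{1..n2}. k \<le> c u}" by (rule card_bij_filter[OF b2])
  finally show ?thesis using card_bot[OF c] by simp
qed

end



lemma mrun_le: assumes "\<forall>s\<in>set M. wfm s" "\<forall>u. c u \<le> n" shows "\<forall>u. mrun n M c u \<le> n"
  using assms
proof (induction M arbitrary: c)
  case Nil thus ?case by simp
next
  case (Cons s M)
  have "\<forall>u. mstep n s c u \<le> n" using mstep_le[of s c n] Cons.prems by simp
  thus ?case using Cons.IH[of "mstep n s c"] Cons.prems by simp
qed

context prodctx
begin

lemma rowstep: assumes m: "wfm m" and x: "x \<in> V2"
  shows "step (rowst m) F (u,x) = step m (\<lambda>v. F (v,x)) u"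
  unfolding rowst_def step_gstep using lift_step[OF ge2 _ x, of "\<lambda>x. m" min max F u] m by simp

lemma colsorted_cong: "colsorted d c F \<Longrightarrow> (\<forall>u\<in>V1. c u = c' u) \<Longrightarrow> colsorted d c' F"
  unfolding colsorted_def by simp

lemma cross: assumes i: "i < length M1" and zo: "\<forall>z. F z \<le> (1::nat)"
    and cs: "colsorted (dirs i) c F" and c: "\<forall>u. c u \<le> n2" and u: "u \<in> V1"
  shows "cnt (step (rowst (M1!i)) F) u = mstep n2 (M1!i) c u"
proof -
  define m where "m = M1!i"
  have wm: "wfm m" and iv: "inV V1 m" using w1 i unfolding m_def by auto
  define G where "G = step (rowst m) F"
  have Gx: "G (u,x) = step m (\<lambda>v. F (v,x)) u" if "x \<in> V2" for x
    unfolding G_def using rowstep[OF wm that] .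
  have Fx: "F (v,x) = (if dirs i v then (if n2 - c v < \<pi>2 x then 1 else 0) else (if \<pi>2 x \<le> c v then 1 else 0))"
    if "v \<in> V1" "x \<in> V2" for v x using cs that unfolding colsorted_def by simp
  have dm: "dirs i v = (\<exists>y. (v,y,True) \<in> m)" for v unfolding dirs_def m_def using i by simp
  have "cnt G u = mstep n2 m c u"
  proof (cases u m rule: match_cases)
    case (lo v)
    have v: "v \<in> V1" using iv lo unfolding inV_def by blast
    have du: "dirs i u" using dm lo by blast
    have dv: "\<not> dirs i v"
    proof
      assume "dirs i v" then obtain y where y: "(v,y,True) \<in> m" using dm by blast
      show False using wfm_uniq'[OF wm lo y, of v] wfm_neq[OF wm lo] by simp
    qed
    have "G (u,x) = 1 \<longleftrightarrow> n2 - c u < \<pi>2 x \<and> \<pi>2 x \<le> c v" if "x \<in> V2" for x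
      using Gx[OF that] gs_lo[OF wm lo, of min max "\<lambda>v. F (v,x)"] Fx[OF u that] Fx[OF v that] du dv unfolding step_gstep
      by (simp add: min_def)
    hence "cnt G u = card {x\<in>V2. n2 - c u < \<pi>2 x \<and> \<pi>2 x \<le> c v}" unfolding cnt_def
      by (intro arg_cong[where f=card]) auto
    also have "\<dots> = card {k\<in>{1..n2}. n2 - c u < k \<and> k \<le> c v}" by (rule card_bij_filter[OF b2])
    also have "\<dots> = c v - (n2 - c u)" by (rule card_int1) (use c in auto)
    also have "\<dots> = c u + c v - n2" using c[rule_format, of u] by simp
    also have "\<dots> = mstep n2 m c u" unfolding mstep_def gs_lo[OF wm lo] ..
    finally show ?thesis .
  next
    case (hi v)
    have v: "v \<in> V1" using iv hi unfolding inV_def by blast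
    have dv: "dirs i v" using dm hi by blast
    have du: "\<not> dirs i u"
    proof
      assume "dirs i u" then obtain y where y: "(u,y,True) \<in> m" using dm by blast
      show False using wfm_uniq'[OF wm hi y, of u] wfm_neq[OF wm hi] by simp
    qed
    have "G (u,x) = 1 \<longleftrightarrow> \<pi>2 x \<le> c u \<or> n2 - c v < \<pi>2 x" if "x \<in> V2" for x
      using Gx[OF that] gs_hi[OF wm hi, of min max "\<lambda>v. F (v,x)"] Fx[OF u that] Fx[OF v that] du dv unfolding step_gstep
      by (simp add: max_def)
    hence "cnt G u = card {x\<in>V2. \<pi>2 x \<le> c u \<or> n2 - c v < \<pi>2 x}" unfolding cnt_def
      by (intro arg_cong[where f=card]) auto
    also have "\<dots> = card {k\<in>{1..n2}. k \<le> c u \<or> n2 - c v < k}" by (rule card_bij_filter[OF b2])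
    also have "\<dots> = min n2 (c u + c v)" by (rule card_union) (use c in auto)
    also have "\<dots> = mstep n2 m c u" unfolding mstep_def gs_hi[OF wm hi] ..
    finally show ?thesis .
  next
    case (sw v)
    have v: "v \<in> V1" using iv sw unfolding inV_def by blast
    have "G (u,x) = F (v,x)" if "x \<in> V2" for x using Gx[OF that] gs_sw[OF wm sw, of min max "\<lambda>v. F (v,x)"] unfolding step_gstep by simp
    hence "cnt G u = cnt F v" unfolding cnt_def by (intro arg_cong[where f=card]) auto
    also have "\<dots> = c v" by (rule colsorted_cnt[OF cs _ v]) (use c in auto)
    also have "\<dots> = mstep n2 m c u" unfolding mstep_def gs_sw[OF wm sw] ..
    finally show ?thesis .
  next
    case none
    have "G (u,x) = F (u,x)" if "x \<in> V2" for x using Gx[OF that] gs_none[OF none, of min max "\<lambda>v. F (v,x)"] unfolding step_gstep by simp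
    hence "cnt G u = cnt F u" unfolding cnt_def by (intro arg_cong[where f=card]) auto
    also have "\<dots> = c u" by (rule colsorted_cnt[OF cs _ u]) (use c in auto)
    also have "\<dots> = mstep n2 m c u" unfolding mstep_def gs_none[OF none] ..
    finally show ?thesis .
  qed
  thus ?thesis unfolding G_def m_def .
qed

definition pre :: "nat \<Rightarrow> ('a \<times> 'b) dmatching list" where
  "pre i = colphase (dirs 0) @ concat (map (\<lambda>j. rowst (M1!j) # colphase (dirs (Suc j))) [0..<i])"

definition pnet :: "('a \<times> 'b) dmatching list" where
  "pnet = pre (length M1)"

lemma pre_Suc: "pre (Suc i) = pre i @ (rowst (M1!i) # colphase (dirs (Suc i)))"
  by (simp add: pre_def)

lemma phase: assumes i: "i \<le> length M1" and zo: "\<forall>z. h z \<le> (1::nat)"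
  shows "(\<forall>z. run (pre i) h z \<le> 1) \<and> colsorted (dirs i) (mrun n2 (take i M1) (cnt h)) (run (pre i) h)"
  using i
proof (induction i)
  case 0
  have "pre 0 = colphase (dirs 0)" by (simp add: pre_def)
  thus ?case using colphase_sorted[OF zo, of "dirs 0"] run_le[OF zo] by simp
next
  case (Suc i)
  define F where "F = run (pre i) h"
  have ih: "\<forall>z. F z \<le> 1" "colsorted (dirs i) (mrun n2 (take i M1) (cnt h)) F"
    using Suc F_def by auto
  define G where "G = step (rowst (M1!i)) F"
  have zG: "\<forall>z. G z \<le> 1" unfolding G_def using step_le[OF ih(1)] by blast
  have r: "run (pre (Suc i)) h = run (colphase (dirs (Suc i))) G"
    unfolding pre_Suc run_append F_def[symmetric] G_def by simp
  have wt: "\<forall>s\<in>set (take i M1). wfm s" using w1 by (auto dest: in_set_takeD)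
  have cl: "\<forall>u. mrun n2 (take i M1) (cnt h) u \<le> n2" by (rule mrun_le[OF wt]) (simp add: cnt_le)
  have "\<forall>u\<in>V1. cnt G u = mrun n2 (take (Suc i) M1) (cnt h) u"
  proof
    fix u assume u: "u \<in> V1"
    have "take (Suc i) M1 = take i M1 @ [M1!i]" using Suc.prems by (simp add: take_Suc_conv_app_nth)
    hence "mrun n2 (take (Suc i) M1) (cnt h) u = mstep n2 (M1!i) (mrun n2 (take i M1) (cnt h)) u"
      by (simp add: mrun_snoc)
    thus "cnt G u = mrun n2 (take (Suc i) M1) (cnt h) u"
      unfolding G_def using cross[OF _ ih(1) ih(2) cl u] Suc.prems by simp
  qed
  hence "colsorted (dirs (Suc i)) (mrun n2 (take (Suc i) M1) (cnt h)) (run (colphase (dirs (Suc i))) G)"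
    using colsorted_cong[OF colphase_sorted[OF zG]] by blast
  thus ?case using r run_le[OF zG] by simp
qed

lemma pnet_01: assumes zo: "\<forall>z. h z \<le> (1::nat)" and u: "u \<in> V1" and x: "x \<in> V2"
  shows "run pnet h (u,x) = (if n2 - mrun n2 M1 (cnt h) u < \<pi>2 x then 1 else 0)"
  using phase[OF order_refl zo] u x unfolding pnet_def colsorted_def dirs_def by simp

end



lemma arith_final:
  fixes n1 n2 s t \<rho> r N C :: nat
  assumes N: "N = n2*s + t" and t: "t < n2" and s: "s \<le> n1" and ts: "0 < t \<longrightarrow> s < n1"
    and \<rho>: "1 \<le> \<rho>" "\<rho> \<le> n1" and r: "1 \<le> r" "r \<le> n2"
    and C: "C = (if n1 - s < \<rho> then n2 else if n1 - s = \<rho> then t else 0)"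
  shows "(n2 - C < r) \<longleftrightarrow> (n1*n2 - N < (\<rho>-1)*n2 + r)"
proof -
  obtain a where a: "n1 = a + s" using s by (metis le_add_diff_inverse2)
  obtain p where p: "\<rho> = Suc p" using \<rho>(1) by (cases \<rho>) auto
  have e1: "n1*n2 = a*n2 + s*n2" using a by (simp add: algebra_simps)
  have ns: "n2*s = s*n2" by simp
  have L: "n1*n2 - N = a*n2 - t" using e1 N ns by simp
  have R: "\<rho>-1 = p" using p by simp
  have "(n2 - C < r) \<longleftrightarrow> (a*n2 - t < p*n2 + r)"
  proof (cases "a < \<rho>")
    case True
    hence "a \<le> p" using p by simp
    hence m: "a*n2 \<le> p*n2" by (rule mult_le_mono1)
    have "C = n2" using True C a by simp
    thus ?thesis using m r by linarith
  next
    case False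
    show ?thesis
    proof (cases "a = \<rho>")
      case True
      hence m: "a*n2 = p*n2 + n2" using p by simp
      have "C = t" using True False C a by simp
      thus ?thesis using m r t by linarith
    next
      case False2: False
      hence "Suc p < a" using False p by simp
      then obtain q where q: "a = Suc (Suc (p + q))" by (metis Suc_lessE add_Suc_right less_imp_Suc_add)
      have m: "a*n2 = p*n2 + q*n2 + 2*n2" unfolding q by (simp add: algebra_simps)
      have "C = 0" using False False2 C a by simp
      thus ?thesis using m r t by linarith
    qed
  qed
  thus ?thesis unfolding L R .
qed



lemma comb:
  fixes S :: "nat \<Rightarrow> nat"
  assumes bal: "\<forall>k<n2. S k = s0 \<or> S k = Suc s0" and Sle: "\<forall>k<n2. S k \<le> n1"
    and \<rho>: "1 \<le> \<rho>" "\<rho> \<le> n1" and r: "1 \<le> r" "r \<le> n2"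
  shows "(n2 - (\<Sum>k<n2. if n1 - S k < \<rho> then 1 else 0) < r) \<longleftrightarrow> (n1*n2 - (\<Sum>k<n2. S k) < (\<rho>-1)*n2 + r)"
proof -
  have n2: "0 < n2" using r by simp
  obtain s where hs: "\<forall>k<n2. S k = s \<or> S k = Suc s" and ht: "card {k. k<n2 \<and> S k = Suc s} < n2"
  proof (cases "card {k. k<n2 \<and> S k = Suc s0} < n2")
    case True thus ?thesis using that bal by blast
  next
    case False
    have sub: "{k. k<n2 \<and> S k = Suc s0} \<subseteq> {..<n2}" by auto
    hence "card {k. k<n2 \<and> S k = Suc s0} \<le> n2" using card_mono[OF _ sub] by simp
    hence "card {k. k<n2 \<and> S k = Suc s0} = card {..<n2}" using False by simp
    hence "{k. k<n2 \<and> S k = Suc s0} = {..<n2}" using card_subset_eq[OF _ sub] by simp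
    hence all: "\<forall>k<n2. S k = Suc s0" by auto
    hence "{k. k<n2 \<and> S k = Suc (Suc s0)} = {}" by auto
    hence e: "card {k. k<n2 \<and> S k = Suc (Suc s0)} < n2" using n2 by (simp only: card.empty)
    show ?thesis by (rule that[of "Suc s0"]) (use all e in auto)
  qed
  define T where "T = {k. k<n2 \<and> S k = Suc s}"
  define t where "t = card T"
  have TT: "T \<subseteq> {..<n2}" by (auto simp: T_def)
  have Sk: "S k = s + (if k \<in> T then 1 else 0)" if "k < n2" for k using hs that by (auto simp: T_def)
  have N: "(\<Sum>k<n2. S k) = n2*s + t"
  proof -
    have "(\<Sum>k<n2. S k) = (\<Sum>k<n2. s + (if k \<in> T then 1 else 0))" using Sk by simp
    also have "\<dots> = n2*s + (\<Sum>k<n2. if k \<in> T then 1 else 0)" by (simp add: sum.distrib)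
    also have "(\<Sum>k<n2. if k \<in> T then 1 else 0) = t" unfolding t_def by (rule sum_ind[OF TT])
    finally show ?thesis .
  qed
  have s: "s \<le> n1"
  proof -
    have "S 0 \<le> n1" "S 0 = s \<or> S 0 = Suc s" using Sle hs n2 by auto
    thus ?thesis by auto
  qed
  have ts: "0 < t \<longrightarrow> s < n1"
  proof
    assume "0 < t" hence "T \<noteq> {}" unfolding t_def by auto
    then obtain k where "k < n2" "S k = Suc s" by (auto simp: T_def)
    thus "s < n1" using Sle by auto
  qed
  have C: "(\<Sum>k<n2. if n1 - S k < \<rho> then 1 else 0) = (if n1 - s < \<rho> then n2 else if n1 - s = \<rho> then t else 0)"
  proof (cases "n1 - s < \<rho>")
    case True
    have "(\<Sum>k<n2. if n1 - S k < \<rho> then 1 else (0::nat)) = (\<Sum>k<n2. 1)"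
      using True hs by (intro sum.cong) auto
    thus ?thesis using True by simp
  next
    case False
    show ?thesis
    proof (cases "n1 - s = \<rho>")
      case True
      have "(\<Sum>k<n2. if n1 - S k < \<rho> then 1 else (0::nat)) = (\<Sum>k<n2. if k \<in> T then 1 else 0)"
        using True hs \<rho> by (intro sum.cong) (auto simp: T_def)
      thus ?thesis using True sum_ind[OF TT] t_def by simp
    next
      case False2: False
      have "(\<Sum>k<n2. if n1 - S k < \<rho> then 1 else (0::nat)) = (\<Sum>k<n2. 0)"
        using False False2 hs by (intro sum.cong) auto
      thus ?thesis using False False2 by simp
    qed
  qed
  have tl: "t < n2" using ht unfolding t_def T_def .
  show ?thesis unfolding C N
    by (rule arith_final[OF refl tl s ts \<rho> r refl])
qed



context prodctx
begin

definition ppi :: "'a \<times> 'b \<Rightarrow> nat" where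
  "ppi z = (case z of (u,x) \<Rightarrow> (\<pi>1 u - 1) * n2 + \<pi>2 x)"

lemma pnet_01_final: assumes zo: "\<forall>z. h z \<le> (1::nat)" and u: "u \<in> V1" and x: "x \<in> V2"
  shows "run pnet h (u,x) = (if n1*n2 - card {z\<in>V1\<times>V2. h z = 1} < ppi (u,x) then 1 else 0)"
proof -
  define c0 where "c0 = cnt h"
  have c0le: "\<forall>u. c0 u \<le> n2" unfolding c0_def using cnt_le by blast
  obtain X where X1: "\<forall>k<n2. \<forall>u. X k u \<le> 1" and X2: "\<forall>u. (\<Sum>k<n2. X k u) = c0 u"
    and Xb: "bal V1 n2 X" and Xr: "\<forall>u. mrun n2 M1 c0 u = (\<Sum>k<n2. run M1 (X k) u)"
    using layer[OF w1 fin1 c0le] by blast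
  define S where "S k = (\<Sum>v\<in>V1. X k v)" for k
  have rX: "run M1 (X k) u = (if n1 - S k < \<pi>1 u then 1 else 0)" if k: "k < n2" for k
  proof -
    have "run M1 (X k) u = (if n1 - card {v\<in>V1. X k v = 1} < \<pi>1 u then 1 else 0)"
      using sort01[OF fin1 s1, of "X k"] X1 k u by blast
    moreover have "card {v\<in>V1. X k v = 1} = S k" unfolding S_def
      by (rule card01V[OF fin1]) (use X1 k in auto)
    ultimately show ?thesis by simp
  qed
  have bal': "\<exists>s0. \<forall>k<n2. S k = s0 \<or> S k = Suc s0" using Xb unfolding bal_def S_def .
  then obtain s0 where s0: "\<forall>k<n2. S k = s0 \<or> S k = Suc s0" by blast
  have Sle: "\<forall>k<n2. S k \<le> n1"
  proof (intro allI impI)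
    fix k assume k: "k < n2"
    have "S k = card {v\<in>V1. X k v = 1}" unfolding S_def
      by (rule card01V[OF fin1, symmetric]) (use X1 k in auto)
    also have "\<dots> \<le> n1" using fin1 by (intro card_mono) auto
    finally show "S k \<le> n1" .
  qed
  have N: "card {z\<in>V1\<times>V2. h z = 1} = (\<Sum>k<n2. S k)"
  proof -
    have "{z\<in>V1\<times>V2. h z = 1} = (SIGMA u:V1. {x\<in>V2. h (u,x) = 1})" by auto
    hence "card {z\<in>V1\<times>V2. h z = 1} = (\<Sum>u\<in>V1. c0 u)"
      unfolding c0_def cnt_def using fin1 fin2 by simp
    also have "\<dots> = (\<Sum>u\<in>V1. \<Sum>k<n2. X k u)" using X2 by simp
    also have "\<dots> = (\<Sum>k<n2. S k)" unfolding S_def by (rule sum.swap)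
    finally show ?thesis .
  qed
  have \<rho>: "1 \<le> \<pi>1 u" "\<pi>1 u \<le> n1" using bij_betwE[OF b1] u by auto
  have r: "1 \<le> \<pi>2 x" "\<pi>2 x \<le> n2" using bij_betwE[OF b2] x by auto
  have "run pnet h (u,x) = (if n2 - mrun n2 M1 c0 u < \<pi>2 x then 1 else 0)"
    unfolding c0_def by (rule pnet_01[OF zo u x])
  also have "mrun n2 M1 c0 u = (\<Sum>k<n2. if n1 - S k < \<pi>1 u then 1 else 0)"
    using Xr rX by simp
  also have "(n2 - (\<Sum>k<n2. if n1 - S k < \<pi>1 u then 1 else 0) < \<pi>2 x) \<longleftrightarrow>
      (n1*n2 - (\<Sum>k<n2. S k) < (\<pi>1 u - 1)*n2 + \<pi>2 x)"
    by (rule comb[OF s0 Sle \<rho> r])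
  finally show ?thesis unfolding N ppi_def by simp
qed

lemma ppi_range: assumes "u \<in> V1" "x \<in> V2" shows "1 \<le> ppi (u,x)" "ppi (u,x) \<le> n1*n2"
proof -
  have \<rho>: "1 \<le> \<pi>1 u" "\<pi>1 u \<le> n1" using bij_betwE[OF b1] assms by auto
  have r: "1 \<le> \<pi>2 x" "\<pi>2 x \<le> n2" using bij_betwE[OF b2] assms by auto
  show "1 \<le> ppi (u,x)" using r by (simp add: ppi_def)
  obtain p where p: "\<pi>1 u = Suc p" using \<rho> by (cases "\<pi>1 u") auto
  have "Suc p * n2 \<le> n1*n2" using \<rho> p by (intro mult_le_mono1) simp
  hence "p*n2 + n2 \<le> n1*n2" by simp
  thus "ppi (u,x) \<le> n1*n2" using r p by (simp add: ppi_def)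
qed

lemma pnet_sorts: assumes f: "bij_betw f (V1\<times>V2) {1..card (V1\<times>V2)}" and z: "z \<in> V1\<times>V2"
  shows "run pnet f z = ppi z"
proof -
  define n where "n = n1*n2"
  have cV: "card (V1\<times>V2) = n" unfolding n_def by (simp add: card_cartesian_product)
  obtain u x where ux: "z = (u,x)" "u \<in> V1" "x \<in> V2" using z by auto
  have key: "t < run pnet f z \<longleftrightarrow> t < ppi z" if t: "t \<le> n" for t
  proof -
    define g where "g k = (if t < k then 1 else (0::nat))" for k
    have mg: "mono g" by (auto simp: mono_def g_def)
    define h where "h = (\<lambda>z. g (f z))"
    have zo: "\<forall>z. h z \<le> 1" by (simp add: h_def g_def)
    have "card {z\<in>V1\<times>V2. h z = 1} = card {z\<in>V1\<times>V2. t < f z}"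
      by (intro arg_cong[where f=card]) (auto simp: h_def g_def)
    also have "\<dots> = card {k\<in>{1..card (V1\<times>V2)}. t < k}" by (rule card_bij_filter[OF f])
    also have "{k\<in>{1..card (V1\<times>V2)}. t < k} = {t<..n}" using cV t by auto
    finally have cN: "card {z\<in>V1\<times>V2. h z = 1} = n - t" by simp
    have "run pnet h = (\<lambda>z. g (run pnet f z))" unfolding h_def by (rule run_mono_comm[OF mg])
    hence "run pnet h z = g (run pnet f z)" by simp
    moreover have "run pnet h z = (if t < ppi z then 1 else 0)"
    proof -
      have "run pnet h (u,x) = (if n1*n2 - card {z\<in>V1\<times>V2. h z = 1} < ppi (u,x) then 1 else 0)"
        by (rule pnet_01_final[OF zo ux(2,3)])
      also have "n1*n2 - card {z\<in>V1\<times>V2. h z = 1} = t" unfolding cN n_def[symmetric] using t by simp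
      finally show ?thesis unfolding ux(1) .
    qed
    ultimately have "g (run pnet f z) = (if t < ppi z then 1 else 0)" by simp
    thus ?thesis unfolding g_def by (simp split: if_splits)
  qed
  have pr: "ppi z \<le> n" using ppi_range ux n_def by simp
  show ?thesis
  proof (rule ccontr)
    assume ne: "run pnet f z \<noteq> ppi z"
    show False
    proof (cases "run pnet f z < ppi z")
      case True
      thus False using key[of "run pnet f z"] pr by simp
    next
      case False
      hence "ppi z < run pnet f z" using ne by simp
      thus False using key[of "ppi z"] pr by simp
    qed
  qed
qed

lemma divmod_uniq: assumes "a*n + b = a'*n + b'" "b < (n::nat)" "b' < n" shows "a = a'" "b = b'"
proof -
  have "(a*n + b) div n = a" "(a*n+b) mod n = b" using assms(2) by auto
  moreover have "(a'*n + b') div n = a'" "(a'*n+b') mod n = b'" using assms(3) by auto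
  ultimately show "a = a'" "b = b'" using assms(1) by metis+
qed

lemma ppi_bij: "bij_betw ppi (V1\<times>V2) {1..card (V1\<times>V2)}"
proof -
  have inj: "inj_on ppi (V1\<times>V2)"
  proof (rule inj_onI)
    fix z z' assume z: "z \<in> V1\<times>V2" "z' \<in> V1\<times>V2" and e: "ppi z = ppi z'"
    obtain u x u' x' where ux: "z = (u,x)" "z' = (u',x')" "u\<in>V1" "x\<in>V2" "u'\<in>V1" "x'\<in>V2" using z by auto
    have r: "1 \<le> \<pi>2 x" "\<pi>2 x \<le> n2" "1 \<le> \<pi>2 x'" "\<pi>2 x' \<le> n2" using bij_betwE[OF b2] ux by auto
    have q: "1 \<le> \<pi>1 u" "1 \<le> \<pi>1 u'" using bij_betwE[OF b1] ux by auto
    have "(\<pi>1 u - 1)*n2 + (\<pi>2 x - 1) = (\<pi>1 u' - 1)*n2 + (\<pi>2 x' - 1)" using e ux r by (simp add: ppi_def)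
    moreover have "\<pi>2 x - 1 < n2" "\<pi>2 x' - 1 < n2" using r by auto
    ultimately have "\<pi>1 u - 1 = \<pi>1 u' - 1" "\<pi>2 x - 1 = \<pi>2 x' - 1" using divmod_uniq by blast+
    hence "\<pi>1 u = \<pi>1 u'" "\<pi>2 x = \<pi>2 x'" using q r by auto
    hence "u = u'" "x = x'" using ux b1 b2 unfolding bij_betw_def inj_on_def by auto
    thus "z = z'" using ux by simp
  qed
  have sub: "ppi ` (V1\<times>V2) \<subseteq> {1..card (V1\<times>V2)}" using ppi_range by (auto simp: card_cartesian_product)
  have "card (ppi ` (V1\<times>V2)) = card {1..card (V1\<times>V2)}" using card_image[OF inj] by simp
  hence "ppi ` (V1\<times>V2) = {1..card (V1\<times>V2)}" using card_subset_eq[OF _ sub] by simp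
  thus ?thesis using inj unfolding bij_betw_def by simp
qed

end



context prodctx
begin

lemma length_pre: "length (pre i) = length M2 + i * (1 + length M2)"
  by (induction i) (simp_all add: pre_def colphase_def)

lemma length_pnet: "length pnet = length M2 + length M1 * (1 + length M2)"
  unfolding pnet_def by (rule length_pre)

lemma set_pre: "m \<in> set (pre i) \<Longrightarrow>
   (\<exists>d m2. m2 \<in> set M2 \<and> m = lift V1 (\<lambda>u y. (u,y)) (\<lambda>u. if d u then m2 else flip m2)) \<or>
   (\<exists>j<i. m = rowst (M1!j))"
proof (induction i)
  case 0 thus ?case by (auto simp: pre_def colphase_def)
next
  case (Suc i)
  from Suc.prems consider "m \<in> set (pre i)" | "m = rowst (M1!i)" | "m \<in> set (colphase (dirs (Suc i)))"
    unfolding pre_Suc by auto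
  thus ?case
  proof cases
    case 1 thus ?thesis using Suc.IH by (meson less_SucI)
  next
    case 2 thus ?thesis by blast
  next
    case 3 thus ?thesis by (auto simp: colphase_def)
  qed
qed

lemma colphase_in_pnet: "set (colphase (dirs 0)) \<subseteq> set pnet"
  by (simp add: pnet_def pre_def)

lemma pre_mono: "i \<le> j \<Longrightarrow> set (pre i) \<subseteq> set (pre j)"
proof (induction j)
  case 0 thus ?case by simp
next
  case (Suc j)
  show ?case
  proof (cases "i = Suc j")
    case True thus ?thesis by simp
  next
    case False
    hence "set (pre i) \<subseteq> set (pre j)" using Suc by simp
    also have "set (pre j) \<subseteq> set (pre (Suc j))" unfolding pre_Suc by auto
    finally show ?thesis .
  qed
qed

lemma rowst_in_pnet: assumes "i < length M1" shows "rowst (M1!i) \<in> set pnet"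
proof -
  have "rowst (M1!i) \<in> set (pre (Suc i))" unfolding pre_Suc by simp
  moreover have "set (pre (Suc i)) \<subseteq> set pnet" unfolding pnet_def using assms by (intro pre_mono) simp
  ultimately show ?thesis by blast
qed

end

lemma edge_neq: assumes "graph V E" "{u,v} \<in> E" shows "u \<noteq> v \<and> u \<in> V \<and> v \<in> V"
proof -
  obtain a b where "{u,v} = {a,b}" "a\<noteq>b" "a\<in>V" "b\<in>V" using assms unfolding graph_def by blast
  thus ?thesis by (auto simp: doubleton_eq_iff)
qed

lemma dm_wfm: assumes "graph V E" "EH \<subseteq> E" "dir_matching EH m" shows "wfm m \<and> inV V m"
proof -
  have "u \<noteq> v \<and> u \<in> V \<and> v \<in> V" if "(u,v,b) \<in> m" for u v b
    using assms that edge_neq[of V E u v] unfolding dir_matching_def by force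
  thus ?thesis using assms(3) unfolding dir_matching_def wfm_def inV_def by blast
qed

lemma cart_mono: "EH1 \<subseteq> E1 \<Longrightarrow> EH2 \<subseteq> E2 \<Longrightarrow> cart_edges V1 EH1 V2 EH2 \<subseteq> cart_edges V1 E1 V2 E2"
  unfolding cart_edges_def by blast

lemma cart_col: "u \<in> V1 \<Longrightarrow> {a,b} \<in> EH2 \<Longrightarrow> {(u,a),(u,b)} \<in> cart_edges V1 EH1 V2 EH2"
  unfolding cart_edges_def by blast

lemma cart_row: "x \<in> V2 \<Longrightarrow> {a,b} \<in> EH1 \<Longrightarrow> {(a,x),(b,x)} \<in> cart_edges V1 EH1 V2 EH2"
  unfolding cart_edges_def by blast

lemma conn_row: assumes "(a,b) \<in> {(x,y). {x,y} \<in> EH1}\<^sup>*" "x \<in> V2"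
  shows "((a,x),(b,x)) \<in> {(p,q). {p,q} \<in> cart_edges V1 EH1 V2 EH2}\<^sup>*"
  using assms(1)
proof (induction rule: rtrancl_induct)
  case base thus ?case by simp
next
  case (step y z)
  hence "{(y,x),(z,x)} \<in> cart_edges V1 EH1 V2 EH2" using cart_row[OF assms(2)] by simp
  thus ?case using step.IH by (simp add: rtrancl.rtrancl_into_rtrancl)
qed

lemma conn_col: assumes "(a,b) \<in> {(x,y). {x,y} \<in> EH2}\<^sup>*" "u \<in> V1"
  shows "((u,a),(u,b)) \<in> {(p,q). {p,q} \<in> cart_edges V1 EH1 V2 EH2}\<^sup>*"
  using assms(1)
proof (induction rule: rtrancl_induct)
  case base thus ?case by simp
next
  case (step y z)
  hence "{(u,y),(u,z)} \<in> cart_edges V1 EH1 V2 EH2" using cart_col[OF assms(2)] by simp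
  thus ?case using step.IH by (simp add: rtrancl.rtrancl_into_rtrancl)
qed

lemma conn_prod: assumes "connected_graph V1 EH1" "connected_graph V2 EH2"
  shows "connected_graph (V1\<times>V2) (cart_edges V1 EH1 V2 EH2)"
  unfolding connected_graph_def
proof (intro ballI)
  fix p q assume p: "p \<in> V1\<times>V2" and q: "q \<in> V1\<times>V2"
  obtain a x b y where ab: "p = (a,x)" "q = (b,y)" "a\<in>V1" "x\<in>V2" "b\<in>V1" "y\<in>V2" using p q by auto
  have 1: "((a,x),(b,x)) \<in> {(p,q). {p,q} \<in> cart_edges V1 EH1 V2 EH2}\<^sup>*"
    using assms(1) ab by (intro conn_row) (auto simp: connected_graph_def)
  have 2: "((b,x),(b,y)) \<in> {(p,q). {p,q} \<in> cart_edges V1 EH1 V2 EH2}\<^sup>*"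
    using assms(2) ab by (intro conn_col) (auto simp: connected_graph_def)
  show "(p,q) \<in> {(p,q). {p,q} \<in> cart_edges V1 EH1 V2 EH2}\<^sup>*"
    using rtrancl_trans[OF 1 2] ab by simp
qed



context prodctx
begin

lemma pnet_dm: assumes dm1: "\<forall>m\<in>set M1. dir_matching EH1 m" and dm2: "\<forall>m\<in>set M2. dir_matching EH2 m"
  shows "\<forall>m\<in>set pnet. dir_matching (cart_edges V1 EH1 V2 EH2) m"
proof
  fix m assume m: "m \<in> set pnet"
  have wm: "wfm m"
  proof -
    from set_pre[OF m[unfolded pnet_def]] show ?thesis
    proof (elim disjE exE conjE)
      fix d m2 assume m2: "m2 \<in> set M2" and e: "m = lift V1 (\<lambda>u y. (u,y)) (\<lambda>u. if d u then m2 else flip m2)"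
      have "wfm m2" using w2 m2 by simp
      hence "\<forall>u\<in>V1. wfm (if d u then m2 else flip m2)" using wfm_flip[of m2] by simp
      thus ?thesis unfolding e by (rule wfm_lift[OF ge1])
    next
      fix j assume j: "j < length M1" and e: "m = rowst (M1!j)"
      have "wfm (M1!j)" using w1 j by simp
      thus ?thesis unfolding e rowst_def by (intro wfm_lift[OF ge2]) simp
    qed
  qed
  have ends: "ends p \<in> cart_edges V1 EH1 V2 EH2" if p: "p \<in> m" for p
  proof -
    obtain z1 z2 bo where pz: "p = (z1,z2,bo)" by (cases p)
    from set_pre[OF m[unfolded pnet_def]] show ?thesis
    proof (elim disjE exE conjE)
      fix d m2 assume m2: "m2 \<in> set M2" and e: "m = lift V1 (\<lambda>u y. (u,y)) (\<lambda>u. if d u then m2 else flip m2)"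
      obtain u a b where u: "u \<in> V1" "(a,b,bo) \<in> (if d u then m2 else flip m2)" "z1 = (u,a)" "z2 = (u,b)"
        using lift_memD[of z1 z2 bo] p pz e by blast
      have "{a,b} \<in> EH2"
      proof (cases "d u")
        case True thus ?thesis using u dm2 m2 unfolding dir_matching_def by force
      next
        case False
        then obtain q where "q \<in> m2" "(a,b,bo) = fl q" using u by (auto simp: flip_def)
        moreover have "ends q \<in> EH2" using dm2 m2 \<open>q \<in> m2\<close> unfolding dir_matching_def by blast
        ultimately show ?thesis by (metis ends.simps ends_fl)
      qed
      thus ?thesis using pz u cart_col[OF u(1), of a b EH2 EH1 V2] by simp
    next
      fix j assume j: "j < length M1" and e: "m = rowst (M1!j)"
      obtain x a b where x: "x \<in> V2" "(a,b,bo) \<in> M1!j" "z1 = (a,x)" "z2 = (b,x)"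
        using lift_memD[of z1 z2 bo] p pz e unfolding rowst_def by blast
      have "{a,b} \<in> EH1" using x dm1 j unfolding dir_matching_def by force
      thus ?thesis using pz x cart_row[OF x(1), of a b EH1 V1 EH2] by simp
    qed
  qed
  show "dir_matching (cart_edges V1 EH1 V2 EH2) m"
    using ends wm unfolding dir_matching_def wfm_def by blast
qed

lemma pnet_cover: assumes cov1: "\<forall>e\<in>EH1. \<exists>m\<in>set M1. \<exists>p\<in>m. e = ends p"
    and cov2: "\<forall>e\<in>EH2. \<exists>m\<in>set M2. \<exists>p\<in>m. e = ends p"
  shows "\<forall>e\<in>cart_edges V1 EH1 V2 EH2. \<exists>m\<in>set pnet. \<exists>p\<in>m. e = ends p"
proof
  fix e assume "e \<in> cart_edges V1 EH1 V2 EH2"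
  then obtain u1 u2 v1 v2 where e: "e = {(u1,u2),(v1,v2)}"
    and c: "(u1 = v1 \<and> u1 \<in> V1 \<and> {u2,v2} \<in> EH2) \<or> (u2 = v2 \<and> u2 \<in> V2 \<and> {u1,v1} \<in> EH1)"
    unfolding cart_edges_def by blast
  from c show "\<exists>m\<in>set pnet. \<exists>p\<in>m. e = ends p"
  proof (elim disjE conjE)
    assume eq: "u1 = v1" and u1: "u1 \<in> V1" and ed: "{u2,v2} \<in> EH2"
    obtain m2 q where m2: "m2 \<in> set M2" "q \<in> m2" "{u2,v2} = ends q" using cov2 ed by blast
    define q' where "q' = (if dirs 0 u1 then q else fl q)"
    have q'm: "q' \<in> (if dirs 0 u1 then m2 else flip m2)" using m2 by (simp add: q'_def flip_def)
    obtain a b bo where q'e: "q' = (a,b,bo)" by (cases q')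
    have eab: "{u2,v2} = {a,b}" using m2(3) q'e by (simp add: q'_def split: if_splits) (metis ends.simps ends_fl)
    define m where "m = lift V1 (\<lambda>u y. (u,y)) (\<lambda>u. if dirs 0 u then m2 else flip m2)"
    have mm: "m \<in> set pnet" using colphase_in_pnet m2(1) unfolding m_def colphase_def by auto
    have pm: "((u1,a),(u1,b),bo) \<in> m" unfolding m_def
      using lift_mem[of u1 V1 a b bo "\<lambda>u. if dirs 0 u then m2 else flip m2" "\<lambda>u y. (u,y)"] u1 q'm q'e by simp
    have "e = ends ((u1,a),(u1,b),bo)" using e eq eab by (auto simp: doubleton_eq_iff)
    thus ?thesis using mm pm by blast
  next
    assume eq: "u2 = v2" and u2: "u2 \<in> V2" and ed: "{u1,v1} \<in> EH1"
    obtain m1 q where m1: "m1 \<in> set M1" "q \<in> m1" "{u1,v1} = ends q" using cov1 ed by blast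
    obtain a b bo where qe: "q = (a,b,bo)" by (cases q)
    obtain j where j: "j < length M1" "M1!j = m1" using m1(1) by (metis in_set_conv_nth)
    have mm: "rowst (M1!j) \<in> set pnet" by (rule rowst_in_pnet[OF j(1)])
    have pm: "((a,u2),(b,u2),bo) \<in> rowst (M1!j)" unfolding rowst_def
      using lift_mem[of u2 V2 a b bo "\<lambda>x. M1!j" "\<lambda>x v. (v,x)"] u2 m1(2) qe j(2) by simp
    have "e = ends ((a,u2),(b,u2),bo)" using e eq m1(3) qe by (auto simp: doubleton_eq_iff)
    thus ?thesis using mm pm by blast
  qed
qed

end



lemma sn_least: assumes "\<exists>EH M \<pi>. sorting_network V E EH M \<pi>"
  obtains EH M \<pi> where "sorting_network V E EH M \<pi>" "sorting_number V E = enat (length M)"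
proof -
  define s where "s = (LEAST d. \<exists>EH M \<pi>. sorting_network V E EH M \<pi> \<and> length M = d)"
  have "\<exists>d. \<exists>EH M \<pi>. sorting_network V E EH M \<pi> \<and> length M = d" using assms by blast
  hence "\<exists>EH M \<pi>. sorting_network V E EH M \<pi> \<and> length M = s" unfolding s_def by (rule LeastI_ex)
  then obtain EH M \<pi> where "sorting_network V E EH M \<pi>" "length M = s" by blast
  moreover have "sorting_number V E = enat s" using assms unfolding sorting_number_def s_def by simp
  ultimately show ?thesis using that by simp
qed

lemma sn_le: assumes "sorting_network V E EH M \<pi>" shows "sorting_number V E \<le> enat (length M)"
proof -
  have ex: "\<exists>EH M \<pi>. sorting_network V E EH M \<pi>" using assms by blast
  have "(LEAST d. \<exists>EH M \<pi>. sorting_network V E EH M \<pi> \<and> length M = d) \<le> length M"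
    by (rule Least_le) (use assms in blast)
  thus ?thesis using ex unfolding sorting_number_def by simp
qed

lemma sn_D: assumes "sorting_network V E EH M \<pi>"
  shows "EH \<subseteq> E" "connected_graph V EH" "bij_betw \<pi> V {1..card V}" "\<forall>m\<in>set M. dir_matching EH m"
    "\<forall>e\<in>EH. \<exists>m\<in>set M. \<exists>p\<in>m. e = ends p"
    "\<forall>f. bij_betw f V {1..card V} \<longrightarrow> (\<forall>x\<in>V. run M f x = \<pi> x)"
  using assms unfolding sorting_network_def by blast+

lemma sn_w: assumes "graph V E" "sorting_network V E EH M \<pi>" shows "\<forall>m\<in>set M. wfm m \<and> inV V m"
proof
  fix m assume "m \<in> set M"
  hence "dir_matching EH m" using sn_D(4)[OF assms(2)] by blast
  thus "wfm m \<and> inV V m" by (rule dm_wfm[OF assms(1) sn_D(1)[OF assms(2)]])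
qed

theorem theorem2:
  fixes V1 :: "'a set" and E1 :: "'a set set" and V2 :: "'b set" and E2 :: "'b set set"
  assumes "graph V1 E1" and "graph V2 E2"
  shows "sorting_number (V1 \<times> V2) (cart_edges V1 E1 V2 E2)
           \<le> sorting_number V1 E1 * sorting_number V2 E2
              + sorting_number V1 E1 + sorting_number V2 E2"
proof (cases "(\<exists>EH M \<pi>. sorting_network V1 E1 EH M \<pi>) \<and> (\<exists>EH M \<pi>. sorting_network V2 E2 EH M \<pi>)")
  case False
  hence "sorting_number V1 E1 = \<infinity> \<or> sorting_number V2 E2 = \<infinity>" unfolding sorting_number_def by auto
  hence "sorting_number V1 E1 * sorting_number V2 E2 + sorting_number V1 E1 + sorting_number V2 E2 = \<infinity>"
    by (elim disjE) simp_all
  thus ?thesis by simp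
next
  case True
  obtain EH1 M1 \<pi>1 where N1: "sorting_network V1 E1 EH1 M1 \<pi>1" and st1: "sorting_number V1 E1 = enat (length M1)"
    using sn_least True by blast
  obtain EH2 M2 \<pi>2 where N2: "sorting_network V2 E2 EH2 M2 \<pi>2" and st2: "sorting_number V2 E2 = enat (length M2)"
    using sn_least True by blast
  have fin1: "finite V1" and fin2: "finite V2" using assms unfolding graph_def by auto
  have w1: "\<forall>m\<in>set M1. wfm m \<and> inV V1 m" by (rule sn_w[OF assms(1) N1])
  have w2: "\<forall>m\<in>set M2. wfm m \<and> inV V2 m" by (rule sn_w[OF assms(2) N2])
  interpret P: prodctx V1 V2 M1 M2 \<pi>1 \<pi>2
    by (rule prodctx.intro[OF fin1 fin2 w1 w2 sn_D(6)[OF N1] sn_D(6)[OF N2] sn_D(3)[OF N1] sn_D(3)[OF N2]])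
  have SN: "sorting_network (V1\<times>V2) (cart_edges V1 E1 V2 E2) (cart_edges V1 EH1 V2 EH2) P.pnet P.ppi"
    unfolding sorting_network_def
  proof (intro conjI allI impI)
    show "cart_edges V1 EH1 V2 EH2 \<subseteq> cart_edges V1 E1 V2 E2"
      by (rule cart_mono[OF sn_D(1)[OF N1] sn_D(1)[OF N2]])
    show "connected_graph (V1 \<times> V2) (cart_edges V1 EH1 V2 EH2)"
      by (rule conn_prod[OF sn_D(2)[OF N1] sn_D(2)[OF N2]])
    show "bij_betw P.ppi (V1 \<times> V2) {1..card (V1 \<times> V2)}" by (rule P.ppi_bij)
    show "\<forall>m\<in>set P.pnet. dir_matching (cart_edges V1 EH1 V2 EH2) m"
      by (rule P.pnet_dm[OF sn_D(4)[OF N1] sn_D(4)[OF N2]])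
    show "\<forall>e\<in>cart_edges V1 EH1 V2 EH2. \<exists>m\<in>set P.pnet. \<exists>p\<in>m. e = ends p"
      by (rule P.pnet_cover[OF sn_D(5)[OF N1] sn_D(5)[OF N2]])
    fix f assume f: "bij_betw f (V1 \<times> V2) {1..card (V1 \<times> V2)}"
    show "\<forall>x\<in>V1 \<times> V2. run P.pnet f x = P.ppi x" using P.pnet_sorts[OF f] by blast
  qed
  have "sorting_number (V1\<times>V2) (cart_edges V1 E1 V2 E2) \<le> enat (length P.pnet)" by (rule sn_le[OF SN])
  also have "length P.pnet = length M1 * length M2 + length M1 + length M2"
    unfolding P.length_pnet by (simp add: algebra_simps)
  also have "enat (length M1 * length M2 + length M1 + length M2) =
      sorting_number V1 E1 * sorting_number V2 E2 + sorting_number V1 E1 + sorting_number V2 E2"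
    unfolding st1 st2 by simp
  finally show ?thesis .
qed


end
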